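(* Let $f,g,\beta$ satisfy the standing assumptions below, and let $\{(x_k,y_k)\}$, $\eta_k$, $u_{x,k},u_{y,k},\xi_{x,k},\xi_{y,k}$, a set-valued map $\mathcal{D}$ and $\delta>0$ be such that $x_{k+1}=x_k-\eta_k(u_{x,k}+\xi_{x,k})$, $y_{k+1}=y_k-\eta_k(u_{y,k}+\xi_{y,k})$ and conditions (a)–(f) below hold. Let $\gamma:\mathbb{R}_+\to\mathbb{R}^n\times\mathbb{R}^p$ be any absolutely continuous path with $\gamma'(t)\in-\mathcal{D}(\gamma(t))$ for a.e. $t\in\mathbb{R}_+$. Then for every $t>0$, $h(\gamma(t))-h(\gamma(0))\le-\delta\int_0^t\mathrm{dist}(0,\mathcal{D}(\gamma(\tau)))^2\,d\tau$. (a) $\sup_k\|x_k\|+\|y_k\|<\infty$. (b) $\eta_k>0$, $\sum_k\eta_k=\infty$, $\sum_k\eta_k^2<\infty$. (c) $\sum_{k=0}^N\eta_k\xi_{x,k}$ and $\sum_{k=0}^N\eta_k\xi_{y,k}$ converge as $N\to\infty$. (d) $\mathcal{D}$ has closed graph and compact convex values, and for any unbounded increasing $\{k_j\}$ with $(x_{k_j},y_{k_j})\to(\tilde x,\tilde y)$, $\lim_N\mathrm{dist}(\frac1N\sum_{j=1}^N(u_{x,k_j},u_{y,k_j}),\mathcal{D}(\tilde x,\tilde y))=0$. (e) $\{h(x,y):0\in\mathcal{D}(x,y)\}$ has empty interior. (f) For all $(x,y)$ and $w\in\mathcal{D}(x,y)$, $\sup_{\zeta\in\mathcal{D}_h(x,y)}\zeta^\top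 w\ge\delta\|w\|^2$.
   Context: Standing assumptions. (A1) Constants $M_f,\mu,L_g,Q_g>0$ exist such that: $f:\mathbb{R}^n\times\mathbb{R}^p\to\mathbb{R}$ is $M_f$-Lipschitz; $g$ is twice differentiable with $\nabla^2_{yy}g\succeq\mu I_p$; $\nabla g$ is $L_g$-Lipschitz; $\nabla^2_{yy}g,\nabla^2_{xy}g$ are $Q_g$-Lipschitz; $\nabla^2_{yy}g$ is continuously differentiable ($\nabla^2_{xy}g\in\mathbb{R}^{n\times p}$ has entries $\partial^2g/\partial x_i\partial y_j$). (A2) $f$ is a potential function of a conservative field $\mathcal{D}_f$ with compact convex values of norm at most $M_f$ (conservative field: closed graph, nonempty compact values, $\int_0^1\max_{v\in\mathcal{D}(\gamma(t))}\langle\gamma'(t),v\rangle dt=0$ along every absolutely continuous loop; potential: $\phi(\gamma(1))-\phi(\gamma(0))$ equals this integral along any absolutely continuous curve). $\beta>0$. Notation: $H=\nabla^2_{yy}g(x,y)$; $\mathcal{A}(x,y):=y-H^{-1}\nabla_yg(x,y)$; $h(x,y):=f(x,\mathcal{A}(x,y))+\frac\beta2\|\nabla_yg(x,y)\|^2$; $\nabla^3_{xyy}g(x,y)[d]:=\lim_{t\to0}\frac1t(\nabla^2_{xy}g(x,y+td)-\nabla^2_{xy}g(x,y))$, $\nabla^3_{yyy}g(x,y)[d]:=\lim_{t\to0}\frac1t(\nabla^2_{yy}g(x,y+td)-\nabla^2_{yy}g(x,y))$; $J_{A,x}:=-\nabla^2_{xy}gH^{-1}+\nabla^3_{xyy}g[H^{-1}\nabla_yg]H^{-1}$,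 $J_{A,y}:=\nabla^3_{yyy}g[H^{-1}\nabla_yg]H^{-1}$; $\mathcal{D}_h(x,y):=\{(d_x+J_{A,x}d_y+\beta\nabla^2_{xy}g\nabla_yg,\ J_{A,y}d_y+\beta H\nabla_yg):(d_x,d_y)\in\mathcal{D}_f(x,\mathcal{A}(x,y))\}$, a conservative field admitting $h$ as potential. *)

theory Defs
  imports "HOL-Analysis.Analysis"
begin

definition abs_cont_on_interval :: "real \<Rightarrow> real \<Rightarrow> (real \<Rightarrow> 'a::real_normed_vector) \<Rightarrow> bool" where
  "abs_cont_on_interval a b \<gamma> \<longleftrightarrow>
     (\<forall>\<epsilon>>0. \<exists>d>0. \<forall>(m::nat) (s::nat \<Rightarrow> real) (t::nat \<Rightarrow> real).
        (\<forall>i<m. a \<le> s i \<and> s i \<le> t i \<and> t i \<le> b) \<and>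
        (\<forall>i<m. \<forall>j<m. i \<noteq> j \<longrightarrow> t i \<le> s j \<or> t j \<le> s i) \<and>
        (\<Sum>i<m. t i - s i) < d
        \<longrightarrow> (\<Sum>i<m. norm (\<gamma> (t i) - \<gamma> (s i))) < \<epsilon>)"

definition conservative_field :: "('a::euclidean_space \<Rightarrow> 'a set) \<Rightarrow> bool" where
  "conservative_field D \<longleftrightarrow>
     closed {(z, v). v \<in> D z} \<and>
     (\<forall>z. D z \<noteq> {} \<and> compact (D z)) \<and>
     (\<forall>\<gamma>. abs_cont_on_interval 0 1 \<gamma> \<and> \<gamma> 0 = \<gamma> 1 \<longrightarrow>
        ((\<lambda>t. Sup ((\<lambda>v. vector_derivative \<gamma> (at t) \<bullet> v) ` D (\<gamma> t))) has_integral 0) {0..1})"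

definition is_potential :: "('a::euclidean_space \<Rightarrow> real) \<Rightarrow> ('a \<Rightarrow> 'a set) \<Rightarrow> bool" where
  "is_potential \<phi> D \<longleftrightarrow>
     (\<forall>\<gamma>. abs_cont_on_interval 0 1 \<gamma> \<longrightarrow>
        ((\<lambda>t. Sup ((\<lambda>v. vector_derivative \<gamma> (at t) \<bullet> v) ` D (\<gamma> t))) has_integral
           (\<phi> (\<gamma> 1) - \<phi> (\<gamma> 0))) {0..1})"

text \<open>Directional derivative in the y-variable, defined as the limit of difference quotients
  (used for the third-order tensors nabla^3_{xyy} g [d] and nabla^3_{yyy} g [d]).\<close>
definition dir_deriv_y :: "('a::real_normed_vector \<times> 'b::real_normed_vector \<Rightarrow> 'c::real_normed_vector)
    \<Rightarrow> 'a \<times> 'b \<Rightarrow> 'b \<Rightarrow> 'c" where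
  "dir_deriv_y F z d = Lim (at (0::real)) (\<lambda>t. (1 / t) *\<^sub>R (F (fst z, snd z + t *\<^sub>R d) - F z))"

text \<open>Here Dg is the gradient of g (pair (nabla_x g, nabla_y g)), Hxy = nabla^2_{xy} g (n x p),
  Hyy = nabla^2_{yy} g (p x p).\<close>

definition Amap :: "((real^'n) \<times> (real^'p) \<Rightarrow> (real^'n) \<times> (real^'p)) \<Rightarrow> ((real^'n) \<times> (real^'p) \<Rightarrow> real^'p^'p)
    \<Rightarrow> (real^'n) \<times> (real^'p) \<Rightarrow> real^'p" where
  "Amap Dg Hyy z = snd z - matrix_inv (Hyy z) *v snd (Dg z)"

definition hfun :: "((real^'n) \<times> (real^'p) \<Rightarrow> real) \<Rightarrow> ((real^'n) \<times> (real^'p) \<Rightarrow> (real^'n) \<times> (real^'p))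
    \<Rightarrow> ((real^'n) \<times> (real^'p) \<Rightarrow> real^'p^'p) \<Rightarrow> real \<Rightarrow> (real^'n) \<times> (real^'p) \<Rightarrow> real" where
  "hfun f Dg Hyy \<beta> z = f (fst z, Amap Dg Hyy z) + \<beta> / 2 * (norm (snd (Dg z)))\<^sup>2"

definition JAx :: "((real^'n) \<times> (real^'p) \<Rightarrow> (real^'n) \<times> (real^'p)) \<Rightarrow> ((real^'n) \<times> (real^'p) \<Rightarrow> real^'p^'n)
    \<Rightarrow> ((real^'n) \<times> (real^'p) \<Rightarrow> real^'p^'p) \<Rightarrow> (real^'n) \<times> (real^'p) \<Rightarrow> real^'p^'n" where
  "JAx Dg Hxy Hyy z =
     - (Hxy z ** matrix_inv (Hyy z))
     + dir_deriv_y Hxy z (matrix_inv (Hyy z) *v snd (Dg z)) ** matrix_inv (Hyy z)"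

definition JAy :: "((real^'n) \<times> (real^'p) \<Rightarrow> (real^'n) \<times> (real^'p))
    \<Rightarrow> ((real^'n) \<times> (real^'p) \<Rightarrow> real^'p^'p) \<Rightarrow> (real^'n) \<times> (real^'p) \<Rightarrow> real^'p^'p" where
  "JAy Dg Hyy z = dir_deriv_y Hyy z (matrix_inv (Hyy z) *v snd (Dg z)) ** matrix_inv (Hyy z)"

definition Dh :: "((real^'n) \<times> (real^'p) \<Rightarrow> ((real^'n) \<times> (real^'p)) set)
    \<Rightarrow> ((real^'n) \<times> (real^'p) \<Rightarrow> (real^'n) \<times> (real^'p)) \<Rightarrow> ((real^'n) \<times> (real^'p) \<Rightarrow> real^'p^'n)
    \<Rightarrow> ((real^'n) \<times> (real^'p) \<Rightarrow> real^'p^'p) \<Rightarrow> real \<Rightarrow> (real^'n) \<times> (real^'p) \<Rightarrow> ((real^'n) \<times> (real^'p)) set" where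
  "Dh Df Dg Hxy Hyy \<beta> z =
     (\<lambda>(dx, dy). (dx + JAx Dg Hxy Hyy z *v dy + \<beta> *\<^sub>R (Hxy z *v snd (Dg z)),
                  JAy Dg Hyy z *v dy + \<beta> *\<^sub>R (Hyy z *v snd (Dg z))))
     ` Df (fst z, Amap Dg Hyy z)"

end

theory Submission
  imports Defs
begin



lemma interior_disjoint_real:
  fixes c d c' d' :: real
  assumes "c < d" "c' < d'" "interior {c..d} \<inter> interior {c'..d'} = {}"
  shows "d \<le> c' \<or> d' \<le> c"
proof (rule ccontr)
  assume "\<not> ?thesis"
  hence "c' < d" "c < d'" by auto
  define mm :: real where "mm = (max c c' + min d d') / 2"
  have "mm \<in> interior {c..d} \<inter> interior {c'..d'}"
    using assms \<open>c' < d\<close> \<open>c < d'\<close> unfolding mm_def by auto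
  thus False using assms(3) by auto
qed

lemma ac_sum_small:
  fixes u :: "real \<Rightarrow> 'a::real_normed_vector"
  assumes AC: "abs_cont_on_interval a b u" and "\<epsilon> > 0"
  obtains \<eta> where "\<eta> > 0" and
    "\<And>Q. finite Q \<Longrightarrow> (\<forall>K\<in>Q. \<exists>c d. K = {c..d} \<and> c < d \<and> a \<le> c \<and> d \<le> b) \<Longrightarrow>
       pairwise (\<lambda>K L. interior K \<inter> interior L = {}) Q \<Longrightarrow> (\<Sum>K\<in>Q. measure lborel K) < \<eta> \<Longrightarrow>
       (\<Sum>K\<in>Q. norm (u (Sup K) - u (Inf K))) < \<epsilon>"
proof -
  obtain \<eta> where \<eta>: "\<eta> > 0" and H: "\<And>(m::nat) s t.
        (\<forall>i<m. a \<le> s i \<and> s i \<le> t i \<and> t i \<le> b) \<and>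
        (\<forall>i<m. \<forall>j<m. i \<noteq> j \<longrightarrow> t i \<le> s j \<or> t j \<le> s i) \<and>
        (\<Sum>i<m. t i - s i) < \<eta>
        \<Longrightarrow> (\<Sum>i<m. norm (u (t i) - u (s i))) < \<epsilon>"
  proof -
    have "\<exists>d>0. \<forall>(m::nat) (s::nat \<Rightarrow> real) (t::nat \<Rightarrow> real).
        (\<forall>i<m. a \<le> s i \<and> s i \<le> t i \<and> t i \<le> b) \<and>
        (\<forall>i<m. \<forall>j<m. i \<noteq> j \<longrightarrow> t i \<le> s j \<or> t j \<le> s i) \<and>
        (\<Sum>i<m. t i - s i) < d
        \<longrightarrow> (\<Sum>i<m. norm (u (t i) - u (s i))) < \<epsilon>"
      using AC \<open>\<epsilon> > 0\<close> unfolding abs_cont_on_interval_def by blast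
    then obtain d where "d > 0" and "\<forall>(m::nat) (s::nat \<Rightarrow> real) (t::nat \<Rightarrow> real).
        (\<forall>i<m. a \<le> s i \<and> s i \<le> t i \<and> t i \<le> b) \<and>
        (\<forall>i<m. \<forall>j<m. i \<noteq> j \<longrightarrow> t i \<le> s j \<or> t j \<le> s i) \<and>
        (\<Sum>i<m. t i - s i) < d
        \<longrightarrow> (\<Sum>i<m. norm (u (t i) - u (s i))) < \<epsilon>" by blast
    thus ?thesis using that by blast
  qed
  show ?thesis
  proof (rule that[OF \<eta>])
    fix Q :: "real set set"
    assume fin: "finite Q" and iv: "\<forall>K\<in>Q. \<exists>c d. K = {c..d} \<and> c < d \<and> a \<le> c \<and> d \<le> b"
      and pw: "pairwise (\<lambda>K L. interior K \<inter> interior L = {}) Q" and sm: "(\<Sum>K\<in>Q. measure lborel K) < \<eta>"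
    obtain h where h: "bij_betw h {0..<card Q} Q" using ex_bij_betw_nat_finite[OF fin] by blast
    define m where "m = card Q"
    define s where "s i = Inf (h i)" for i
    define t where "t i = Sup (h i)" for i
    have hQ: "i < m \<Longrightarrow> h i \<in> Q" for i using h unfolding m_def bij_betw_def by auto
    have st: "i < m \<Longrightarrow> h i = {s i..t i} \<and> s i < t i \<and> a \<le> s i \<and> t i \<le> b" for i
    proof -
      assume "i < m"
      then obtain c d where "h i = {c..d}" "c < d" "a \<le> c" "d \<le> b" using iv hQ by blast
      thus ?thesis unfolding s_def t_def by auto
    qed
    have inj: "i < m \<Longrightarrow> j < m \<Longrightarrow> i \<noteq> j \<Longrightarrow> h i \<noteq> h j" for i j
      using h unfolding bij_betw_def inj_on_def m_def by auto
    have c2: "\<forall>i<m. \<forall>j<m. i \<noteq> j \<longrightarrow> t i \<le> s j \<or> t j \<le> s i"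
    proof (intro allI impI)
      fix i j assume ij: "i < m" "j < m" "i \<noteq> j"
      have "h i \<in> Q" "h j \<in> Q" "h i \<noteq> h j" using hQ ij inj by auto
      hence "interior (h i) \<inter> interior (h j) = {}"
        using pw unfolding pairwise_def by blast
      moreover have "h i = {s i..t i}" "s i < t i" "h j = {s j..t j}" "s j < t j" using st ij by auto
      ultimately show "t i \<le> s j \<or> t j \<le> s i" using interior_disjoint_real by metis
    qed
    have re1: "(\<Sum>i<m. t i - s i) = (\<Sum>K\<in>Q. measure lborel K)"
    proof -
      have "(\<Sum>K\<in>Q. measure lborel K) = (\<Sum>i\<in>{0..<m}. measure lborel (h i))"
        using sum.reindex_bij_betw[OF h, of "measure lborel"] unfolding m_def by simp
      also have "\<dots> = (\<Sum>i<m. t i - s i)"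
        unfolding atLeast0LessThan
      proof (rule sum.cong)
        fix i assume "i \<in> {..<m}"
        hence "h i = {s i..t i}" "s i < t i" using st by auto
        thus "measure lborel (h i) = t i - s i" by simp
      qed simp
      finally show ?thesis by simp
    qed
    have re2: "(\<Sum>i<m. norm (u (t i) - u (s i))) = (\<Sum>K\<in>Q. norm (u (Sup K) - u (Inf K)))"
    proof -
      have "(\<Sum>K\<in>Q. norm (u (Sup K) - u (Inf K))) = (\<Sum>i\<in>{0..<m}. norm (u (Sup (h i)) - u (Inf (h i))))"
        using sum.reindex_bij_betw[OF h, of "\<lambda>K. norm (u (Sup K) - u (Inf K))"] unfolding m_def by simp
      thus ?thesis by (simp add: atLeast0LessThan s_def t_def)
    qed
    have c1: "\<forall>i<m. a \<le> s i \<and> s i \<le> t i \<and> t i \<le> b"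
    proof (intro allI impI)
      fix i assume "i < m"
      from st[OF this] show "a \<le> s i \<and> s i \<le> t i \<and> t i \<le> b" by linarith
    qed
    have "(\<Sum>i<m. norm (u (t i) - u (s i))) < \<epsilon>"
      apply (rule H)
      using c1 c2 re1 sm by simp
    thus "(\<Sum>K\<in>Q. norm (u (Sup K) - u (Inf K))) < \<epsilon>" using re2 by simp
  qed
qed

lemma sum_content_le_measure:
  fixes Q :: "real set set"
  assumes fin: "finite Q" and iv: "\<forall>K\<in>Q. \<exists>c d. K = {c..d} \<and> c < d"
    and pw: "pairwise (\<lambda>K L. interior K \<inter> interior L = {}) Q"
    and sub: "\<Union>Q \<subseteq> T" and T: "T \<in> lmeasurable"
  shows "(\<Sum>K\<in>Q. measure lborel K) \<le> measure lebesgue T"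
proof -
  have "measure lebesgue (\<Union>Q) = (\<Sum>K\<in>Q. measure lebesgue K)"
  proof (rule measure_negligible_finite_Union[OF fin])
    show "K \<in> lmeasurable" if "K \<in> Q" for K using iv that by auto
    show "pairwise (\<lambda>S T. negligible (S \<inter> T)) Q"
      unfolding pairwise_def
    proof (intro ballI impI)
      fix K L assume KL: "K \<in> Q" "L \<in> Q" "K \<noteq> L"
      obtain c d where K: "K = {c..d}" "c < d" using iv KL by blast
      obtain c' d' where L: "L = {c'..d'}" "c' < d'" using iv KL by blast
      have "interior K \<inter> interior L = {}" using pw KL unfolding pairwise_def by blast
      hence "d \<le> c' \<or> d' \<le> c" using interior_disjoint_real K L by metis
      hence "K \<inter> L \<subseteq> {d, d'}" using K L by auto
      moreover have "negligible {d, d'}" by (rule negligible_finite) simp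
      ultimately show "negligible (K \<inter> L)" by (rule negligible_subset[rotated])
    qed
  qed
  moreover have "(\<Sum>K\<in>Q. measure lebesgue K) = (\<Sum>K\<in>Q. measure lborel K)"
  proof (rule sum.cong)
    fix K assume "K \<in> Q"
    then obtain c d where "K = {c..d}" "c < d" using iv by blast
    thus "measure lebesgue K = measure lborel K" by simp
  qed simp
  moreover have "measure lebesgue (\<Union>Q) \<le> measure lebesgue T"
    apply (rule measure_mono_fmeasurable[OF sub _ T])
  proof -
    have "Q \<subseteq> sets lebesgue"
    proof
      fix K assume "K \<in> Q"
      then obtain c d where "K = {c..d}" "c < d" using iv by blast
      thus "K \<in> sets lebesgue" by simp
    qed
    thus "\<Union>Q \<in> sets lebesgue" using fin by blast
  qed
  ultimately show ?thesis by simp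
qed


lemma ftc_ac:
  fixes u u' :: "real \<Rightarrow> real"
  assumes ab: "a < b" and AC: "abs_cont_on_interval a b u" and N: "negligible N"
    and der: "\<And>x. x \<in> {a..b} - N \<Longrightarrow> (u has_real_derivative u' x) (at x within {a..b})"
  shows "((\<lambda>x. if x \<in> N then 0 else u' x) has_integral (u b - u a)) {a..b}"
  unfolding has_integral_factor_content_real
proof (intro allI impI)
  fix e :: real assume e: "e > 0"
  define g where "g = (\<lambda>x. if x \<in> N then 0 else u' x)"
  have eps: "e * (b - a) / 2 > 0" using e ab by simp
  obtain \<eta> where \<eta>: "\<eta> > 0" and H\<eta>: "\<And>Q. finite Q \<Longrightarrow> (\<forall>K\<in>Q. \<exists>c d. K = {c..d} \<and> c < d \<and> a \<le> c \<and> d \<le> b) \<Longrightarrow>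
       pairwise (\<lambda>K L. interior K \<inter> interior L = {}) Q \<Longrightarrow> (\<Sum>K\<in>Q. measure lborel K) < \<eta> \<Longrightarrow>
       (\<Sum>K\<in>Q. norm (u (Sup K) - u (Inf K))) < e * (b - a) / 2"
    by (rule ac_sum_small[OF AC eps]) (rule that)
  have Nsets: "N \<in> sets lebesgue" using N negligible_iff_null_sets null_setsD2 by blast
  obtain T where T: "open T" "N \<subseteq> T" "(T - N) \<in> lmeasurable" "emeasure lebesgue (T - N) < ennreal \<eta>"
    by (rule sets_lebesgue_outer_open[OF Nsets \<eta>]) (rule that)
  have Nl: "N \<in> lmeasurable" using negligible_imp_measurable[OF N] .
  have TeqU: "T = (T - N) \<union> N" using T(2) by blast
  have "(T - N) \<union> N \<in> lmeasurable" by (rule fmeasurable.Un[OF T(3) Nl])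
  hence Tm: "T \<in> lmeasurable" using TeqU by simp
  have TNs: "T - N \<in> sets lebesgue" using T(3) by (rule fmeasurableD)
  have Nn: "N \<in> null_sets lebesgue" using N negligible_iff_null_sets by blast
  have "measure lebesgue ((T - N) \<union> N) = measure lebesgue (T - N)"
    by (rule measure_Un_null_set[OF TNs Nn])
  hence "measure lebesgue T = measure lebesgue (T - N)" using TeqU by simp
  moreover have "measure lebesgue (T - N) < \<eta>"
    using T(4) emeasure_eq_measure2[OF T(3)] \<eta> by (simp add: ennreal_less_iff)
  ultimately have mT: "measure lebesgue T < \<eta>" by simp
  have ex: "\<forall>x. \<exists>r>0. (x \<in> N \<longrightarrow> ball x r \<subseteq> T) \<and>
     (x \<in> {a..b} - N \<longrightarrow> (\<forall>y\<in>{a..b}. \<bar>y - x\<bar> < r \<longrightarrow> \<bar>u y - u x - u' x * (y - x)\<bar> \<le> e / 2 * \<bar>y - x\<bar>))"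
  proof
    fix x
    show "\<exists>r>0. (x \<in> N \<longrightarrow> ball x r \<subseteq> T) \<and>
     (x \<in> {a..b} - N \<longrightarrow> (\<forall>y\<in>{a..b}. \<bar>y - x\<bar> < r \<longrightarrow> \<bar>u y - u x - u' x * (y - x)\<bar> \<le> e / 2 * \<bar>y - x\<bar>))"
    proof (cases "x \<in> N")
      case True
      then obtain r where "r > 0" "ball x r \<subseteq> T" using T(1,2) open_contains_ball by blast
      thus ?thesis using True by blast
    next
      case False
      show ?thesis
      proof (cases "x \<in> {a..b}")
        case True
        hence "(u has_derivative (\<lambda>h. u' x * h)) (at x within {a..b})"
          using der False by (simp add: has_field_derivative_def)
        hence "\<exists>d>0. \<forall>y\<in>{a..b}. norm (y - x) < d \<longrightarrow> norm (u y - u x - u' x * (y - x)) \<le> e / 2 * norm (y - x)"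
          unfolding has_derivative_within_alt using e half_gt_zero by blast
        then obtain r where "r > 0" "\<forall>y\<in>{a..b}. \<bar>y - x\<bar> < r \<longrightarrow> \<bar>u y - u x - u' x * (y - x)\<bar> \<le> e / 2 * \<bar>y - x\<bar>"
          by auto
        thus ?thesis using False by blast
      next
        case False
        thus ?thesis using \<open>x \<notin> N\<close> by (intro exI[of _ 1]) auto
      qed
    qed
  qed
  from choice[OF ex] obtain r where r0: "\<forall>x. r x > 0 \<and> (x \<in> N \<longrightarrow> ball x (r x) \<subseteq> T) \<and>
     (x \<in> {a..b} - N \<longrightarrow> (\<forall>y\<in>{a..b}. \<bar>y - x\<bar> < r x \<longrightarrow> \<bar>u y - u x - u' x * (y - x)\<bar> \<le> e / 2 * \<bar>y - x\<bar>))"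
    by blast
  have r: "\<And>x. r x > 0" "\<And>x. x \<in> N \<Longrightarrow> ball x (r x) \<subseteq> T"
    "\<And>x y. x \<in> {a..b} - N \<Longrightarrow> y \<in> {a..b} \<Longrightarrow> \<bar>y - x\<bar> < r x \<Longrightarrow> \<bar>u y - u x - u' x * (y - x)\<bar> \<le> e / 2 * \<bar>y - x\<bar>"
    using r0 by blast+
  show "\<exists>d. gauge d \<and> (\<forall>p. p tagged_division_of {a..b} \<and> d fine p \<longrightarrow>
      norm ((\<Sum>(x,k)\<in>p. Henstock_Kurzweil_Integration.content k *\<^sub>R g x) - (u b - u a)) \<le> e * Henstock_Kurzweil_Integration.content {a..b})"
  proof (intro exI conjI allI impI)
    show "gauge (\<lambda>x. ball x (r x))" using r(1) by (intro gauge_ball_dependent) auto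
    fix p assume "p tagged_division_of {a..b} \<and> (\<lambda>x. ball x (r x)) fine p"
    hence ptag: "p tagged_division_of {a..b}" and fine: "(\<lambda>x. ball x (r x)) fine p" by auto
    note pd = tagged_division_ofD[OF ptag]
    have finp: "finite p" using pd(1) .
    define F where "F = (\<lambda>(x::real, K::real set). Henstock_Kurzweil_Integration.content K * g x - (u (Sup K) - u (Inf K)))"
    have sumu: "(\<Sum>(x,K)\<in>p. u (Sup K) - u (Inf K)) = u b - u a"
      using additive_tagged_division_1[OF less_imp_le[OF ab] ptag] .
    have eqF: "(\<Sum>(x,k)\<in>p. Henstock_Kurzweil_Integration.content k *\<^sub>R g x) - (u b - u a) = (\<Sum>z\<in>p. F z)"
      unfolding sumu[symmetric] F_def by (simp add: sum_subtractf[symmetric] case_prod_unfold)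
    have Kform: "\<And>x K. (x, K) \<in> p \<Longrightarrow> \<exists>c d. K = {c..d} \<and> c \<le> d \<and> c \<le> x \<and> x \<le> d \<and> a \<le> c \<and> d \<le> b"
    proof -
      fix x K assume xK: "(x, K) \<in> p"
      obtain c d where K: "K = cbox c d" using pd(4)[OF xK] by blast
      have "x \<in> K" "K \<subseteq> {a..b}" using pd(2,3)[OF xK] by auto
      thus "\<exists>c d. K = {c..d} \<and> c \<le> d \<and> c \<le> x \<and> x \<le> d \<and> a \<le> c \<and> d \<le> b"
        using K by (intro exI[of _ c] exI[of _ d]) auto
    qed
    have cont_nn: "\<And>z. z \<in> p \<Longrightarrow> 0 \<le> Henstock_Kurzweil_Integration.content (snd z)" by simp
    have sumc: "(\<Sum>(x,K)\<in>p. Henstock_Kurzweil_Integration.content K) = b - a"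
      using additive_content_tagged_division[of p a b] ptag ab by simp
    define P1 where "P1 = {z \<in> p. fst z \<notin> N}"
    define P2 where "P2 = {z \<in> p. fst z \<in> N}"
    have split: "(\<Sum>z\<in>p. F z) = (\<Sum>z\<in>P1. F z) + (\<Sum>z\<in>P2. F z)"
    proof -
      have "p = P1 \<union> P2" "P1 \<inter> P2 = {}" unfolding P1_def P2_def by auto
      moreover have "finite P1" "finite P2" using finp unfolding P1_def P2_def by auto
      ultimately show ?thesis by (metis sum.union_disjoint)
    qed
    have B1: "\<bar>\<Sum>z\<in>P1. F z\<bar> \<le> e / 2 * (b - a)"
    proof -
      have "\<bar>F z\<bar> \<le> e / 2 * Henstock_Kurzweil_Integration.content (snd z)" if zP: "z \<in> P1" for z
      proof -
        obtain x K where z: "z = (x, K)" by force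
        have xK: "(x, K) \<in> p" and xN: "x \<notin> N" using zP z unfolding P1_def by auto
        obtain c d where cd: "K = {c..d}" "c \<le> d" "c \<le> x" "x \<le> d" "a \<le> c" "d \<le> b" using Kform[OF xK] by blast
        have sub: "K \<subseteq> ball x (r x)" using fine xK by (auto simp: fine_def)
        have "c \<in> K" "d \<in> K" using cd by auto
        hence "c \<in> ball x (r x)" "d \<in> ball x (r x)" using sub by auto
        hence cb: "\<bar>c - x\<bar> < r x" "\<bar>d - x\<bar> < r x"
          by (auto simp: dist_real_def abs_minus_commute)
        have xab: "x \<in> {a..b} - N" using cd xN by auto
        have c1: "\<bar>u c - u x - u' x * (c - x)\<bar> \<le> e / 2 * \<bar>c - x\<bar>" using r(3)[OF xab _ cb(1)] cd by auto
        have c2: "\<bar>u d - u x - u' x * (d - x)\<bar> \<le> e / 2 * \<bar>d - x\<bar>" using r(3)[OF xab _ cb(2)] cd by auto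
        have "F z = (d - c) * u' x - (u d - u c)"
          using cd xN unfolding F_def z g_def by simp
        also have "\<dots> = - (u d - u x - u' x * (d - x)) + (u c - u x - u' x * (c - x))"
          by (simp add: algebra_simps)
        finally have "\<bar>F z\<bar> \<le> e / 2 * \<bar>d - x\<bar> + e / 2 * \<bar>c - x\<bar>" using c1 c2 by linarith
        also have "\<dots> = e / 2 * (d - c)" using cd by (simp add: abs_of_nonneg abs_of_nonpos field_simps)
        also have "\<dots> = e / 2 * Henstock_Kurzweil_Integration.content (snd z)" using cd z by simp
        finally show ?thesis .
      qed
      hence "\<bar>\<Sum>z\<in>P1. F z\<bar> \<le> (\<Sum>z\<in>P1. e / 2 * Henstock_Kurzweil_Integration.content (snd z))"
        by (rule order_trans[OF sum_abs sum_mono]) simp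
      also have "\<dots> = e / 2 * (\<Sum>z\<in>P1. Henstock_Kurzweil_Integration.content (snd z))" by (simp add: sum_distrib_left)
      also have "(\<Sum>z\<in>P1. Henstock_Kurzweil_Integration.content (snd z)) \<le> (\<Sum>z\<in>p. Henstock_Kurzweil_Integration.content (snd z))"
        by (rule sum_mono2[OF finp]) (auto simp: P1_def)
      hence "e / 2 * (\<Sum>z\<in>P1. Henstock_Kurzweil_Integration.content (snd z)) \<le> e / 2 * (b - a)"
        using sumc e by (simp add: case_prod_unfold)
      finally show ?thesis .
    qed
    define P2' where "P2' = {z \<in> P2. Henstock_Kurzweil_Integration.content (snd z) \<noteq> 0}"
    have B2: "\<bar>\<Sum>z\<in>P2. F z\<bar> < e * (b - a) / 2"
    proof -
      have finP2: "finite P2" using finp unfolding P2_def by auto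
      have "\<bar>\<Sum>z\<in>P2. F z\<bar> \<le> (\<Sum>z\<in>P2. \<bar>F z\<bar>)" by (rule sum_abs)
      also have "\<dots> = (\<Sum>z\<in>P2'. \<bar>F z\<bar>)"
      proof (rule sum.mono_neutral_right[OF finP2])
        show "P2' \<subseteq> P2" unfolding P2'_def by auto
        show "\<forall>z\<in>P2 - P2'. \<bar>F z\<bar> = 0"
        proof
          fix z assume zP: "z \<in> P2 - P2'"
          obtain x K where z: "z = (x, K)" by force
          have xK: "(x, K) \<in> p" and xN: "x \<in> N" and c0: "Henstock_Kurzweil_Integration.content K = 0"
            using zP z unfolding P2_def P2'_def by auto
          obtain c d where cd: "K = {c..d}" "c \<le> d" using Kform[OF xK] by blast
          have "c = d" using c0 cd by simp
          thus "\<bar>F z\<bar> = 0" using cd xN c0 unfolding F_def z g_def by simp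
        qed
      qed
      also have "\<dots> = (\<Sum>z\<in>P2'. norm (u (Sup (snd z)) - u (Inf (snd z))))"
        by (rule sum.cong) (auto simp: F_def g_def P2'_def P2_def)
      also have "\<dots> = (\<Sum>K\<in>snd ` P2'. norm (u (Sup K) - u (Inf K)))"
      proof -
        have "inj_on snd P2'"
        proof (rule inj_onI)
          fix z1 z2 assume z12: "z1 \<in> P2'" "z2 \<in> P2'" "snd z1 = snd z2"
          show "z1 = z2"
          proof (rule ccontr)
            assume ne: "z1 \<noteq> z2"
            obtain x1 K where z1: "z1 = (x1, K)" by force
            obtain x2 where z2: "z2 = (x2, K)" using z12(3) z1 by (metis prod.collapse snd_conv)
            have m: "(x1, K) \<in> p" "(x2, K) \<in> p" "Henstock_Kurzweil_Integration.content K \<noteq> 0"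
              using z12 z1 z2 unfolding P2'_def P2_def by auto
            have "interior K \<inter> interior K = {}" using pd(5)[OF m(1,2)] ne z1 z2 by auto
            moreover obtain c d where cd: "K = {c..d}" "c \<le> d" using Kform[OF m(1)] by blast
            moreover have "c < d" using cd m(3) by (cases "c = d") auto
            ultimately show False by auto
          qed
        qed
        thus ?thesis by (simp add: sum.reindex)
      qed
      also have "\<dots> < e * (b - a) / 2"
      proof (rule H\<eta>)
        show "finite (snd ` P2')" using finP2 unfolding P2'_def by auto
        show iv: "\<forall>K\<in>snd ` P2'. \<exists>c d. K = {c..d} \<and> c < d \<and> a \<le> c \<and> d \<le> b"
        proof
          fix K assume "K \<in> snd ` P2'"
          then obtain x where m: "(x, K) \<in> p" "Henstock_Kurzweil_Integration.content K \<noteq> 0" unfolding P2'_def P2_def by force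
          obtain c d where cd: "K = {c..d}" "c \<le> d" "a \<le> c" "d \<le> b" using Kform[OF m(1)] by blast
          have "c < d" using cd m(2) by (cases "c = d") auto
          thus "\<exists>c d. K = {c..d} \<and> c < d \<and> a \<le> c \<and> d \<le> b" using cd by blast
        qed
        show pw: "pairwise (\<lambda>K L. interior K \<inter> interior L = {}) (snd ` P2')"
          unfolding pairwise_def
        proof (intro ballI impI)
          fix K L assume KL: "K \<in> snd ` P2'" "L \<in> snd ` P2'" "K \<noteq> L"
          then obtain x y where "(x, K) \<in> p" "(y, L) \<in> p" unfolding P2'_def P2_def by force
          thus "interior K \<inter> interior L = {}" using pd(5) KL(3) by blast
        qed
        have "(\<Sum>K\<in>snd ` P2'. measure lborel K) \<le> measure lebesgue T"
        proof (rule sum_content_le_measure)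
          show "finite (snd ` P2')" using finP2 unfolding P2'_def by auto
          show "\<forall>K\<in>snd ` P2'. \<exists>c d. K = {c..d} \<and> c < d" using iv by blast
          show "pairwise (\<lambda>K L. interior K \<inter> interior L = {}) (snd ` P2')" using pw .
          show "\<Union> (snd ` P2') \<subseteq> T"
          proof
            fix y assume "y \<in> \<Union> (snd ` P2')"
            then obtain x K where xK: "(x, K) \<in> p" "x \<in> N" "y \<in> K" unfolding P2'_def P2_def by force
            have "K \<subseteq> ball x (r x)" using fine xK(1) by (auto simp: fine_def)
            thus "y \<in> T" using r(2)[OF xK(2)] xK(3) by blast
          qed
          show "T \<in> lmeasurable" using Tm .
        qed
        thus "(\<Sum>K\<in>snd ` P2'. measure lborel K) < \<eta>" using mT by linarith
      qed
      finally show ?thesis .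
    qed
    have "norm ((\<Sum>(x,k)\<in>p. Henstock_Kurzweil_Integration.content k *\<^sub>R g x) - (u b - u a)) = \<bar>(\<Sum>z\<in>P1. F z) + (\<Sum>z\<in>P2. F z)\<bar>"
      using eqF split by simp
    also have "\<dots> \<le> e / 2 * (b - a) + e * (b - a) / 2" using B1 B2 by linarith
    also have "\<dots> = e * Henstock_Kurzweil_Integration.content {a..b}" using ab by simp
    finally show "norm ((\<Sum>(x,k)\<in>p. Henstock_Kurzweil_Integration.content k *\<^sub>R g x) - (u b - u a)) \<le> e * Henstock_Kurzweil_Integration.content {a..b}" .
  qed
qed



lemma dirderiv_quot:
  fixes f :: "'a::real_normed_vector \<Rightarrow> 'b::real_normed_vector"
  assumes "(f has_derivative f') (at x)"
  shows "((\<lambda>s::real. (1 / s) *\<^sub>R (f (x + s *\<^sub>R a) - f x)) \<longlongrightarrow> f' a) (at 0)"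
proof -
  have lin: "linear f'" using assms has_derivative_linear by blast
  have l1: "((\<lambda>s::real. x + s *\<^sub>R a) has_derivative (\<lambda>h. h *\<^sub>R a)) (at 0)"
    by (auto intro!: derivative_eq_intros)
  have "((\<lambda>s. f (x + s *\<^sub>R a)) has_derivative (\<lambda>h. f' (h *\<^sub>R a))) (at 0)"
    using has_derivative_compose[OF l1, of f f'] assms by (simp add: o_def)
  hence g: "((\<lambda>s. f (x + s *\<^sub>R a)) has_derivative (\<lambda>h. h *\<^sub>R f' a)) (at 0)"
    using linear_scale[OF lin] by simp
  hence "((\<lambda>y. norm ((f (x + y *\<^sub>R a) - f (x + 0 *\<^sub>R a)) - (y - 0) *\<^sub>R f' a) / norm (y - 0)) \<longlongrightarrow> 0) (at (0::real))"
    unfolding has_derivative_iff_norm by blast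
  hence L: "((\<lambda>y. norm ((f (x + y *\<^sub>R a) - f x) - y *\<^sub>R f' a) / \<bar>y\<bar>) \<longlongrightarrow> 0) (at (0::real))"
    by simp
  have "((\<lambda>s::real. (1 / s) *\<^sub>R (f (x + s *\<^sub>R a) - f x) - f' a) \<longlongrightarrow> 0) (at 0)"
  proof (rule Lim_null_comparison[OF _ L])
    show "\<forall>\<^sub>F s in at 0. norm ((1 / s) *\<^sub>R (f (x + s *\<^sub>R a) - f x) - f' a) \<le> norm ((f (x + s *\<^sub>R a) - f x) - s *\<^sub>R f' a) / \<bar>s\<bar>"
    proof (rule eventually_mono[OF eventually_at_ball'[of 1 0 UNIV]], simp)
      fix s :: real assume "s \<in> ball 0 1 \<and> s \<noteq> 0 \<and> s \<in> UNIV"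
      hence "s \<noteq> 0" by simp
      hence "(1 / s) *\<^sub>R (f (x + s *\<^sub>R a) - f x) - f' a = (1 / s) *\<^sub>R ((f (x + s *\<^sub>R a) - f x) - s *\<^sub>R f' a)"
        by (simp add: scaleR_diff_right)
      thus "norm ((1 / s) *\<^sub>R (f (x + s *\<^sub>R a) - f x) - f' a) \<le> norm ((f (x + s *\<^sub>R a) - f x) - s *\<^sub>R f' a) / \<bar>s\<bar>"
        by simp
    qed
  qed
  thus ?thesis by (simp add: LIM_zero_iff)
qed

lemma real_line_bound:
  fixes \<phi> :: "real \<Rightarrow> 'b::real_normed_vector"
  assumes "\<And>s. s \<in> closed_segment 0 r \<Longrightarrow> (\<phi> has_derivative (\<lambda>h. h *\<^sub>R \<phi>' s)) (at s)"
    and "\<And>s. s \<in> closed_segment 0 r \<Longrightarrow> norm (\<phi>' s) \<le> B"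
  shows "norm (\<phi> r - \<phi> 0) \<le> B * \<bar>r\<bar>"
proof -
  have "norm (\<phi> r - \<phi> 0) \<le> B * norm (r - 0)"
  proof (rule differentiable_bound[of "closed_segment 0 r" \<phi> "\<lambda>s h. h *\<^sub>R \<phi>' s"])
    show "convex (closed_segment 0 r)" by simp
    show "(\<phi> has_derivative (\<lambda>h. h *\<^sub>R \<phi>' s)) (at s within closed_segment 0 r)" if "s \<in> closed_segment 0 r" for s
      using assms(1)[OF that] has_derivative_at_withinI by blast
    show "onorm (\<lambda>h. h *\<^sub>R \<phi>' s) \<le> B" if "s \<in> closed_segment 0 r" for s
    proof -
      have "onorm (\<lambda>h::real. h) = 1" by (rule onorm_id)
      thus ?thesis using assms(2)[OF that] onorm_scaleR_left[of "\<lambda>x. x" "\<phi>' s"] by simp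
    qed
  qed auto
  thus ?thesis by simp
qed

lemma peano_mixed:
  fixes F :: "'a::real_normed_vector \<Rightarrow> 'b::real_normed_vector"
    and DF :: "'a \<Rightarrow> 'a \<Rightarrow> 'b" and DB :: "'a \<Rightarrow> 'a \<Rightarrow> 'b"
  assumes dF: "\<And>w. (F has_derivative DF w) (at w)"
    and dB: "\<And>w. ((\<lambda>w. DF w b) has_derivative DB w) (at w)"
    and cont: "continuous (at z) (\<lambda>w. DB w a)"
  shows "((\<lambda>r::real. (1 / r) *\<^sub>R (DF (z + r *\<^sub>R b) a - DF z a)) \<longlongrightarrow> DB z a) (at 0)"
  unfolding LIM_eq
proof (intro allI impI)
  fix \<epsilon> :: real assume \<epsilon>: "\<epsilon> > 0"
  define C where "C = DB z a"
  have linF: "\<And>w. linear (DF w)" using dF has_derivative_linear by blast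
  have linB: "\<And>w. linear (DB w)" using dB has_derivative_linear by blast
  obtain \<rho> where \<rho>: "\<rho> > 0" "\<And>w. dist w z < \<rho> \<Longrightarrow> dist (DB w a) (DB z a) < \<epsilon> / 2"
    using cont \<epsilon> unfolding continuous_at_eps_delta by (meson half_gt_zero)
  define d where "d = \<rho> / (2 * (norm b + 1))"
  have d: "d > 0" unfolding d_def by (rule divide_pos_pos[OF \<rho>(1)]) (smt (verit) norm_ge_zero)
  show "\<exists>s>0. \<forall>x. x \<noteq> 0 \<and> norm (x - 0) < s \<longrightarrow>
          norm ((1 / x) *\<^sub>R (DF (z + x *\<^sub>R b) a - DF z a) - DB z a) < \<epsilon>"
  proof (intro exI conjI allI impI)
    show "d > 0" by (rule d)
    fix r :: real assume r: "r \<noteq> 0 \<and> norm (r - 0) < d"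
    have rb: "\<bar>r\<bar> * norm b < \<rho> / 2"
    proof -
      have "\<bar>r\<bar> * norm b \<le> \<bar>r\<bar> * (norm b + 1)" by (simp add: mult_left_mono)
      also have "\<dots> < d * (norm b + 1)" using r by (intro mult_strict_right_mono) (auto, smt (verit) norm_ge_zero)
      also have "\<dots> = \<rho> / 2"
      proof -
        have "x > 0 \<Longrightarrow> \<rho> / (2 * x) * x = \<rho> / 2" for x :: real by (simp add: field_simps)
        moreover have "norm b + 1 > 0" by (smt (verit) norm_ge_zero)
        ultimately show ?thesis unfolding d_def by blast
      qed
      finally show ?thesis .
    qed
    have A: "norm (F (z + s *\<^sub>R a + r *\<^sub>R b) - F (z + s *\<^sub>R a) - F (z + r *\<^sub>R b) + F z - (s * r) *\<^sub>R C)
               \<le> \<epsilon> / 2 * \<bar>s\<bar> * \<bar>r\<bar>" if s: "\<bar>s\<bar> * norm a < \<rho> / 2" for s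
    proof -
      have inner: "norm (DF (z + s *\<^sub>R a + \<rho>' *\<^sub>R b) b - DF (z + \<rho>' *\<^sub>R b) b - s *\<^sub>R C) \<le> \<epsilon> / 2 * \<bar>s\<bar>"
        if \<rho>': "\<rho>' \<in> closed_segment 0 r" for \<rho>'
      proof -
        have \<rho>'b: "\<bar>\<rho>'\<bar> * norm b < \<rho> / 2"
        proof -
          have "\<bar>\<rho>'\<bar> \<le> \<bar>r\<bar>" using \<rho>' by (auto simp: closed_segment_eq_real_ivl split: if_splits)
          hence "\<bar>\<rho>'\<bar> * norm b \<le> \<bar>r\<bar> * norm b" by (simp add: mult_right_mono)
          thus ?thesis using rb by linarith
        qed
        define \<psi> where "\<psi> = (\<lambda>\<sigma>. DF (z + \<sigma> *\<^sub>R a + \<rho>' *\<^sub>R b) b - \<sigma> *\<^sub>R C)"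
        have "norm (\<psi> s - \<psi> 0) \<le> \<epsilon> / 2 * \<bar>s\<bar>"
        proof (rule real_line_bound[where \<phi>' = "\<lambda>\<sigma>. DB (z + \<sigma> *\<^sub>R a + \<rho>' *\<^sub>R b) a - C"])
          fix \<sigma> assume \<sigma>: "\<sigma> \<in> closed_segment 0 s"
          have l1: "((\<lambda>\<sigma>::real. z + \<sigma> *\<^sub>R a + \<rho>' *\<^sub>R b) has_derivative (\<lambda>h. h *\<^sub>R a)) (at \<sigma>)"
            by (auto intro!: derivative_eq_intros)
          have "((\<lambda>\<sigma>. DF (z + \<sigma> *\<^sub>R a + \<rho>' *\<^sub>R b) b) has_derivative (\<lambda>h. DB (z + \<sigma> *\<^sub>R a + \<rho>' *\<^sub>R b) (h *\<^sub>R a))) (at \<sigma>)"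
            using has_derivative_compose[OF l1 dB] by (simp add: o_def)
          hence "((\<lambda>\<sigma>. DF (z + \<sigma> *\<^sub>R a + \<rho>' *\<^sub>R b) b) has_derivative (\<lambda>h. h *\<^sub>R DB (z + \<sigma> *\<^sub>R a + \<rho>' *\<^sub>R b) a)) (at \<sigma>)"
            using linear_scale[OF linB] by simp
          hence "((\<lambda>\<sigma>. DF (z + \<sigma> *\<^sub>R a + \<rho>' *\<^sub>R b) b - \<sigma> *\<^sub>R C) has_derivative
                  (\<lambda>h. h *\<^sub>R DB (z + \<sigma> *\<^sub>R a + \<rho>' *\<^sub>R b) a - h *\<^sub>R C)) (at \<sigma>)"
            by (auto intro!: derivative_eq_intros)
          thus "(\<psi> has_derivative (\<lambda>h. h *\<^sub>R (DB (z + \<sigma> *\<^sub>R a + \<rho>' *\<^sub>R b) a - C))) (at \<sigma>)"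
            unfolding \<psi>_def by (simp add: scaleR_diff_right)
          have "\<bar>\<sigma>\<bar> \<le> \<bar>s\<bar>" using \<sigma> by (auto simp: closed_segment_eq_real_ivl split: if_splits)
          hence "\<bar>\<sigma>\<bar> * norm a < \<rho> / 2" using s by (meson le_less_trans mult_right_mono norm_ge_zero)
          hence "norm (\<sigma> *\<^sub>R a + \<rho>' *\<^sub>R b) < \<rho>"
            using \<rho>'b norm_triangle_ineq[of "\<sigma> *\<^sub>R a" "\<rho>' *\<^sub>R b"] by simp
          hence "dist (z + \<sigma> *\<^sub>R a + \<rho>' *\<^sub>R b) z < \<rho>" by (simp add: dist_norm add.assoc)
          hence "dist (DB (z + \<sigma> *\<^sub>R a + \<rho>' *\<^sub>R b) a) C < \<epsilon> / 2" using \<rho>(2) C_def by blast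
          thus "norm (DB (z + \<sigma> *\<^sub>R a + \<rho>' *\<^sub>R b) a - C) \<le> \<epsilon> / 2" by (simp add: dist_norm)
        qed
        thus ?thesis unfolding \<psi>_def by (simp add: algebra_simps)
      qed
      define \<phi> where "\<phi> = (\<lambda>\<rho>'. F (z + s *\<^sub>R a + \<rho>' *\<^sub>R b) - F (z + \<rho>' *\<^sub>R b) - \<rho>' *\<^sub>R (s *\<^sub>R C))"
      have "norm (\<phi> r - \<phi> 0) \<le> \<epsilon> / 2 * \<bar>s\<bar> * \<bar>r\<bar>"
      proof (rule real_line_bound[where \<phi>' = "\<lambda>\<rho>'. DF (z + s *\<^sub>R a + \<rho>' *\<^sub>R b) b - DF (z + \<rho>' *\<^sub>R b) b - s *\<^sub>R C"])
        fix \<rho>' assume \<rho>': "\<rho>' \<in> closed_segment 0 r"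
        have l1: "((\<lambda>\<rho>'::real. z + s *\<^sub>R a + \<rho>' *\<^sub>R b) has_derivative (\<lambda>h. h *\<^sub>R b)) (at \<rho>')"
          by (auto intro!: derivative_eq_intros)
        have l2: "((\<lambda>\<rho>'::real. z + \<rho>' *\<^sub>R b) has_derivative (\<lambda>h. h *\<^sub>R b)) (at \<rho>')"
          by (auto intro!: derivative_eq_intros)
        have d1: "((\<lambda>\<rho>'. F (z + s *\<^sub>R a + \<rho>' *\<^sub>R b)) has_derivative (\<lambda>h. h *\<^sub>R DF (z + s *\<^sub>R a + \<rho>' *\<^sub>R b) b)) (at \<rho>')"
          using has_derivative_compose[OF l1 dF] linear_scale[OF linF] by (simp add: o_def)
        have d2: "((\<lambda>\<rho>'. F (z + \<rho>' *\<^sub>R b)) has_derivative (\<lambda>h. h *\<^sub>R DF (z + \<rho>' *\<^sub>R b) b)) (at \<rho>')"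
          using has_derivative_compose[OF l2 dF] linear_scale[OF linF] by (simp add: o_def)
        have "(\<phi> has_derivative (\<lambda>h. h *\<^sub>R DF (z + s *\<^sub>R a + \<rho>' *\<^sub>R b) b - h *\<^sub>R DF (z + \<rho>' *\<^sub>R b) b - h *\<^sub>R (s *\<^sub>R C))) (at \<rho>')"
          unfolding \<phi>_def by (intro derivative_intros d1 d2)
        thus "(\<phi> has_derivative (\<lambda>h. h *\<^sub>R (DF (z + s *\<^sub>R a + \<rho>' *\<^sub>R b) b - DF (z + \<rho>' *\<^sub>R b) b - s *\<^sub>R C))) (at \<rho>')"
          by (simp add: scaleR_diff_right)
        show "norm (DF (z + s *\<^sub>R a + \<rho>' *\<^sub>R b) b - DF (z + \<rho>' *\<^sub>R b) b - s *\<^sub>R C) \<le> \<epsilon> / 2 * \<bar>s\<bar>"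
          by (rule inner[OF \<rho>'])
      qed
      thus ?thesis unfolding \<phi>_def by (simp add: algebra_simps)
    qed
    define Q where "Q = (\<lambda>s::real. (1 / s) *\<^sub>R (F (z + r *\<^sub>R b + s *\<^sub>R a) - F (z + r *\<^sub>R b)) - (1 / s) *\<^sub>R (F (z + s *\<^sub>R a) - F z) - r *\<^sub>R C)"
    have QL: "(Q \<longlongrightarrow> DF (z + r *\<^sub>R b) a - DF z a - r *\<^sub>R C) (at 0)"
      unfolding Q_def by (intro tendsto_intros dirderiv_quot dF)
    have Qev: "\<forall>\<^sub>F s in at 0. norm (Q s) \<le> \<epsilon> / 2 * \<bar>r\<bar>"
    proof -
      define e0 where "e0 = \<rho> / (2 * (norm a + 1))"
      have e0: "e0 > 0" unfolding e0_def by (rule divide_pos_pos[OF \<rho>(1)]) (smt (verit) norm_ge_zero)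
      show ?thesis
      proof (rule eventually_mono[OF eventually_at_ball'[OF e0, of 0 UNIV]])
        fix s :: real assume "s \<in> ball 0 e0 \<and> s \<noteq> 0 \<and> s \<in> UNIV"
        hence s: "\<bar>s\<bar> < e0" "s \<noteq> 0" by auto
        have sa: "\<bar>s\<bar> * norm a < \<rho> / 2"
        proof -
          have "\<bar>s\<bar> * norm a \<le> \<bar>s\<bar> * (norm a + 1)" by (simp add: mult_left_mono)
          also have "\<dots> < e0 * (norm a + 1)" using s by (intro mult_strict_right_mono) (auto, smt (verit) norm_ge_zero)
          also have "\<dots> = \<rho> / 2"
          proof -
            have "x > 0 \<Longrightarrow> \<rho> / (2 * x) * x = \<rho> / 2" for x :: real by (simp add: field_simps)
            moreover have "norm a + 1 > 0" by (smt (verit) norm_ge_zero)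
            ultimately show ?thesis unfolding e0_def by blast
          qed
          finally show ?thesis .
        qed
        have "Q s = (1 / s) *\<^sub>R (F (z + s *\<^sub>R a + r *\<^sub>R b) - F (z + s *\<^sub>R a) - F (z + r *\<^sub>R b) + F z - (s * r) *\<^sub>R C)"
          using s(2) unfolding Q_def by (simp add: algebra_simps scaleR_diff_right)
        hence "norm (Q s) = norm (F (z + s *\<^sub>R a + r *\<^sub>R b) - F (z + s *\<^sub>R a) - F (z + r *\<^sub>R b) + F z - (s * r) *\<^sub>R C) / \<bar>s\<bar>"
          by simp
        also have "\<dots> \<le> (\<epsilon> / 2 * \<bar>s\<bar> * \<bar>r\<bar>) / \<bar>s\<bar>"
          using A[OF sa] s(2) by (intro divide_right_mono) auto
        also have "\<dots> = \<epsilon> / 2 * \<bar>r\<bar>" using s(2) by simp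
        finally show "norm (Q s) \<le> \<epsilon> / 2 * \<bar>r\<bar>" .
      qed
    qed
    have "norm (DF (z + r *\<^sub>R b) a - DF z a - r *\<^sub>R C) \<le> \<epsilon> / 2 * \<bar>r\<bar>"
      by (rule Lim_norm_ubound[OF _ QL Qev]) simp
    moreover have "(1 / r) *\<^sub>R (DF (z + r *\<^sub>R b) a - DF z a) - C = (1 / r) *\<^sub>R (DF (z + r *\<^sub>R b) a - DF z a - r *\<^sub>R C)"
      using r by (simp add: scaleR_diff_right)
    ultimately have "norm ((1 / r) *\<^sub>R (DF (z + r *\<^sub>R b) a - DF z a) - C) \<le> \<epsilon> / 2"
      using r by (simp add: divide_le_eq mult.commute)
    thus "norm ((1 / r) *\<^sub>R (DF (z + r *\<^sub>R b) a - DF z a) - DB z a) < \<epsilon>"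
      using \<epsilon> unfolding C_def by linarith
  qed
qed

lemma mv_row: "((A :: real^'m^'n) *v x) $ i = A $ i \<bullet> x"
  by (simp add: matrix_vector_mult_def inner_vec_def)

lemma norm_mv_le: "norm ((A :: real^'m^'n) *v x) \<le> norm A * norm x"
proof -
  have "(norm (A *v x))\<^sup>2 = (A *v x) \<bullet> (A *v x)" by (simp add: dot_square_norm)
  also have "\<dots> = (\<Sum>i\<in>UNIV. (A *v x) $ i * (A *v x) $ i)" unfolding inner_vec_def by simp
  also have "\<dots> = (\<Sum>i\<in>UNIV. (A $ i \<bullet> x)\<^sup>2)" unfolding mv_row by (simp add: power2_eq_square)
  also have "\<dots> \<le> (\<Sum>i\<in>UNIV. (norm (A $ i))\<^sup>2 * (norm x)\<^sup>2)"
  proof (rule sum_mono)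
    fix i
    have "(A $ i \<bullet> x)\<^sup>2 \<le> (A $ i \<bullet> A $ i) * (x \<bullet> x)" by (rule Cauchy_Schwarz_ineq)
    thus "(A $ i \<bullet> x)\<^sup>2 \<le> (norm (A $ i))\<^sup>2 * (norm x)\<^sup>2" by (simp add: dot_square_norm)
  qed
  also have "\<dots> = (norm A)\<^sup>2 * (norm x)\<^sup>2"
    by (simp add: sum_distrib_right[symmetric] dot_square_norm[symmetric] inner_vec_def)
  also have "\<dots> = (norm A * norm x)\<^sup>2" by (simp add: power_mult_distrib)
  finally show ?thesis by (rule power2_le_imp_le) simp
qed

lemma bl_mv_left: "bounded_linear (\<lambda>A :: real^'m^'n. A *v x)"
proof (rule bounded_linear_intro[where K = "norm x"])
  show "(A + B) *v x = A *v x + B *v x" for A B :: "real^'m^'n" by (simp add: algebra_simps)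
  show "(r *\<^sub>R A) *v x = r *\<^sub>R (A *v x)" for r and A :: "real^'m^'n"
    by (simp add: matrix_vector_mult_def vec_eq_iff sum_distrib_left mult.assoc)
  show "norm (A *v x) \<le> norm A * norm x" for A :: "real^'m^'n" by (rule norm_mv_le)
qed

lemma norm_transpose: "norm (transpose (A :: real^'m^'n)) = norm A"
proof -
  have "transpose A \<bullet> transpose A = A \<bullet> A"
    by (simp add: inner_vec_def transpose_def) (rule sum.swap)
  thus ?thesis by (simp add: norm_eq_sqrt_inner)
qed

lemma bl_transpose: "bounded_linear (transpose :: real^'m^'n \<Rightarrow> real^'n^'m)"
proof (rule bounded_linear_intro[where K = 1])
  show "transpose (A + B) = transpose A + transpose B" for A B :: "real^'m^'n"
    by (simp add: transpose_def vec_eq_iff)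
  show "transpose (r *\<^sub>R A) = r *\<^sub>R transpose A" for r and A :: "real^'m^'n"
    by (simp add: transpose_def vec_eq_iff)
  show "norm (transpose A) \<le> norm A * 1" for A :: "real^'m^'n" by (simp add: norm_transpose)
qed

lemma inner_mv_transpose: "((A :: real^'m^'n) *v x) \<bullet> y = x \<bullet> (transpose A *v y)"
  by (metis dot_lmul_matrix transpose_matrix_vector transpose_transpose)

lemma sym_from_inner:
  fixes A :: "real^'m^'m"
  assumes "\<And>a b. (A *v a) \<bullet> b = (A *v b) \<bullet> a"
  shows "transpose A = A"
proof -
  have "A $ i $ j = A $ j $ i" for i j
  proof -
    have "(A *v axis j 1) \<bullet> axis i 1 = (A *v axis i 1) \<bullet> axis j 1" by (rule assms)
    thus ?thesis by (simp add: inner_axis mv_row)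
  qed
  thus ?thesis by (simp add: transpose_def vec_eq_iff)
qed


lemma isCont_mv: "isCont Hm z \<Longrightarrow> isCont (\<lambda>w. (Hm w :: real^'m^'n) *v x) z"
  using bounded_linear.isCont[OF bl_mv_left] by blast

lemma lim_unique_at0:
  fixes f :: "real \<Rightarrow> 'b::real_normed_vector"
  shows "(f \<longlongrightarrow> a) (at 0) \<Longrightarrow> (f \<longlongrightarrow> b) (at 0) \<Longrightarrow> a = b"
  using tendsto_unique[OF trivial_limit_at] by blast

locale bl =
  fixes g :: "(real^'n) \<times> (real^'p) \<Rightarrow> real"
    and Dg :: "(real^'n) \<times> (real^'p) \<Rightarrow> (real^'n) \<times> (real^'p)"
    and Hxy :: "(real^'n) \<times> (real^'p) \<Rightarrow> real^'p^'n"
    and Hyy :: "(real^'n) \<times> (real^'p) \<Rightarrow> real^'p^'p"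
    and \<mu> Lg Qg :: real
    and H' :: "(real^'n) \<times> (real^'p) \<Rightarrow> ((real^'n) \<times> (real^'p)) \<Rightarrow>\<^sub>L (real^'p^'p)"
  assumes mu_pos: "\<mu> > 0"
    and g_grad: "\<And>z. (g has_derivative (\<lambda>d. Dg z \<bullet> d)) (at z)"
    and g_hess: "\<And>z. ((\<lambda>w. snd (Dg w)) has_derivative
                       (\<lambda>d. transpose (Hxy z) *v fst d + Hyy z *v snd d)) (at z)"
    and strong_convex: "\<And>z v. \<mu> * (norm v)\<^sup>2 \<le> v \<bullet> (Hyy z *v v)"
    and grad_lip: "Lg-lipschitz_on UNIV Dg"
    and Hyy_lip: "Qg-lipschitz_on UNIV Hyy"
    and Hxy_lip: "Qg-lipschitz_on UNIV Hxy"
    and H'_der: "\<And>z. (Hyy has_derivative blinfun_apply (H' z)) (at z)"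
    and H'_cont: "continuous_on UNIV H'"
begin

definition G where "G z = snd (Dg z)"
definition DGm where "DGm z d = transpose (Hxy z) *v fst d + Hyy z *v snd d"
definition HI where "HI z = matrix_inv (Hyy z)"
definition V where "V z = HI z *v G z"
definition DH where "DH z u = blinfun_apply (H' z) u"

lemma G_der: "(G has_derivative DGm z) (at z)"
  using g_hess[of z] unfolding G_def[abs_def] DGm_def[abs_def] by simp

lemma DGm_y: "DGm z (0, a) = Hyy z *v a"
  by (simp add: DGm_def)

lemma DGm_x: "DGm z (c, 0) = transpose (Hxy z) *v c"
  by (simp add: DGm_def)

lemma Hyy_cont: "isCont Hyy z"
  using lipschitz_on_continuous_on[OF Hyy_lip] continuous_on_eq_continuous_at open_UNIV UNIV_I by blast

lemma Hxy_cont: "isCont Hxy z"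
  using lipschitz_on_continuous_on[OF Hxy_lip] continuous_on_eq_continuous_at open_UNIV UNIV_I by blast

lemma DH_cont: "isCont (\<lambda>w. DH w u) z"
proof -
  have "isCont H' z" using H'_cont continuous_on_eq_continuous_at open_UNIV UNIV_I by blast
  thus ?thesis unfolding DH_def by (intro continuous_intros) auto
qed

lemma DH_lin: "linear (DH z)"
  unfolding DH_def using blinfun.bounded_linear_right bounded_linear.linear by blast

lemma Hyy_sym: "transpose (Hyy z) = Hyy z"
proof (rule sym_from_inner)
  fix a b
  have P: "((\<lambda>r::real. (1 / r) *\<^sub>R (Dg (z + r *\<^sub>R (0, b)) \<bullet> (0, a) - Dg z \<bullet> (0, a)))
            \<longlongrightarrow> DGm z (0, a) \<bullet> b) (at 0)"
  proof (rule peano_mixed[where F = g and DF = "\<lambda>w d. Dg w \<bullet> d" and DB = "\<lambda>w u. DGm w u \<bullet> b"])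
    show "(g has_derivative (\<lambda>d. Dg w \<bullet> d)) (at w)" for w by (rule g_grad)
    show "((\<lambda>w. Dg w \<bullet> (0, b)) has_derivative (\<lambda>u. DGm w u \<bullet> b)) (at w)" for w
    proof -
      have "((\<lambda>w. G w \<bullet> b) has_derivative (\<lambda>u. DGm w u \<bullet> b)) (at w)"
        by (rule has_derivative_inner_left[OF G_der])
      thus ?thesis by (simp add: G_def inner_Pair_0)
    qed
    show "isCont (\<lambda>w. DGm w (0, a) \<bullet> b) z"
      unfolding DGm_y by (intro continuous_intros isCont_mv Hyy_cont)
  qed
  hence P': "((\<lambda>r::real. (1 / r) *\<^sub>R (G (z + r *\<^sub>R (0, b)) - G z) \<bullet> a) \<longlongrightarrow> (Hyy z *v a) \<bullet> b) (at 0)"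
    by (simp add: G_def inner_Pair_0 DGm_y inner_diff_left)
  have Q: "((\<lambda>r::real. (1 / r) *\<^sub>R (G (z + r *\<^sub>R (0, b)) - G z) \<bullet> a) \<longlongrightarrow> DGm z (0, b) \<bullet> a) (at 0)"
    by (intro tendsto_intros dirderiv_quot G_der)
  show "(Hyy z *v a) \<bullet> b = (Hyy z *v b) \<bullet> a"
    using lim_unique_at0[OF P' Q] by (simp add: DGm_y)
qed

lemma Hyy_inj: "inj ((*v) (Hyy z))"
proof (rule inj_onI)
  fix x y assume "Hyy z *v x = Hyy z *v y"
  hence "Hyy z *v (x - y) = 0" by (simp add: matrix_vector_mult_diff_distrib)
  hence "\<mu> * (norm (x - y))\<^sup>2 \<le> 0" using strong_convex[where z=z and v="x - y"] by simp
  hence "norm (x - y) = 0" using mu_pos by (simp add: mult_le_0_iff)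
  thus "x = y" by simp
qed

lemma Hyy_invertible: "invertible (Hyy z)"
  using Hyy_inj matrix_left_invertible_injective invertible_left_inverse by blast

lemma HI_inv: "Hyy z ** HI z = mat 1" "HI z ** Hyy z = mat 1"
proof -
  have "\<exists>A'. Hyy z ** A' = mat 1 \<and> A' ** Hyy z = mat 1"
    using Hyy_invertible unfolding invertible_def by blast
  hence "Hyy z ** HI z = mat 1 \<and> HI z ** Hyy z = mat 1"
    unfolding HI_def matrix_inv_def by (rule someI_ex)
  thus "Hyy z ** HI z = mat 1" "HI z ** Hyy z = mat 1" by auto
qed

lemma HI_mv: "Hyy z *v (HI z *v x) = x" "HI z *v (Hyy z *v x) = x"
  by (simp_all add: matrix_vector_mul_assoc HI_inv)

lemma HI_sym: "transpose (HI z) = HI z"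
proof -
  have "transpose (HI z) ** Hyy z = mat 1"
    using arg_cong[OF HI_inv(1), of transpose] by (simp add: matrix_transpose_mul Hyy_sym)
  have "transpose (HI z) = transpose (HI z) ** (Hyy z ** HI z)" by (simp add: HI_inv)
  also have "\<dots> = (transpose (HI z) ** Hyy z) ** HI z" by (rule matrix_mul_assoc)
  finally show ?thesis using \<open>transpose (HI z) ** Hyy z = mat 1\<close> by simp
qed

lemma HI_bound: "norm (HI z *v x) \<le> norm x / \<mu>"
proof -
  define y where "y = HI z *v x"
  have "Hyy z *v y = x" unfolding y_def by (rule HI_mv)
  hence "\<mu> * (norm y)\<^sup>2 \<le> y \<bullet> x" using strong_convex[where z=z and v=y] by simp
  also have "\<dots> \<le> norm y * norm x" by (rule norm_cauchy_schwarz)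
  finally have "\<mu> * (norm y)\<^sup>2 \<le> norm y * norm x" .
  hence "\<mu> * norm y \<le> norm x"
    by (cases "norm y = 0") (auto simp: power2_eq_square mult.assoc[symmetric] intro: mult_right_le_imp_le)
  thus ?thesis unfolding y_def using mu_pos by (simp add: field_simps)
qed

lemma Hyy_dir: "((\<lambda>r::real. (1 / r) *\<^sub>R (Hyy (z + r *\<^sub>R u) - Hyy z)) \<longlongrightarrow> DH z u) (at 0)"
  unfolding DH_def by (rule dirderiv_quot[OF H'_der])

lemma DH_sym: "transpose (DH z u) = DH z u"
proof -
  have L: "((\<lambda>r::real. transpose ((1 / r) *\<^sub>R (Hyy (z + r *\<^sub>R u) - Hyy z))) \<longlongrightarrow> transpose (DH z u)) (at 0)"
    using bounded_linear.tendsto[OF bl_transpose Hyy_dir] .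
  have "transpose ((1 / r) *\<^sub>R (Hyy (z + r *\<^sub>R u) - Hyy z)) = (1 / r) *\<^sub>R (Hyy (z + r *\<^sub>R u) - Hyy z)" for r
  proof -
    have lt: "linear (transpose :: real^'p^'p \<Rightarrow> real^'p^'p)" by (rule bounded_linear.linear[OF bl_transpose])
    have "transpose ((1 / r) *\<^sub>R (Hyy (z + r *\<^sub>R u) - Hyy z)) = (1 / r) *\<^sub>R (transpose (Hyy (z + r *\<^sub>R u)) - transpose (Hyy z))"
      by (simp only: linear_scale[OF lt] linear_diff[OF lt])
    thus ?thesis by (simp only: Hyy_sym)
  qed
  hence "((\<lambda>r::real. (1 / r) *\<^sub>R (Hyy (z + r *\<^sub>R u) - Hyy z)) \<longlongrightarrow> transpose (DH z u)) (at 0)"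
    using L by simp
  thus ?thesis using lim_unique_at0 Hyy_dir by blast
qed


lemma mv_scale_diff: "(c *\<^sub>R (A - B)) *v x = c *\<^sub>R (A *v x - (B :: real^'m^'k) *v x)"
proof -
  have l: "linear (\<lambda>A :: real^'m^'k. A *v x)" by (rule bounded_linear.linear[OF bl_mv_left])
  show ?thesis using linear_scale[OF l, of c "A - B"] linear_diff[OF l, of A B] by simp
qed

lemma Hyy_mv_der: "((\<lambda>w. Hyy w *v b) has_derivative (\<lambda>u. DH w u *v b)) (at w)"
  unfolding DH_def using bounded_linear.has_derivative[OF bl_mv_left H'_der] .

lemma DH_yy: "DH z (0, a) *v b = DH z (0, b) *v a"
proof -
  have P: "((\<lambda>r::real. (1 / r) *\<^sub>R (DGm (z + r *\<^sub>R (0, b)) (0, a) - DGm z (0, a))) \<longlongrightarrow> DH z (0, a) *v b) (at 0)"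
  proof (rule peano_mixed[where F = G and DF = DGm and DB = "\<lambda>w u. DH w u *v b"])
    show "(G has_derivative DGm w) (at w)" for w by (rule G_der)
    show "((\<lambda>w. DGm w (0, b)) has_derivative (\<lambda>u. DH w u *v b)) (at w)" for w
      unfolding DGm_y by (rule Hyy_mv_der)
    show "isCont (\<lambda>w. DH w (0, a) *v b) z" by (intro isCont_mv DH_cont)
  qed
  have Q: "((\<lambda>r::real. ((1 / r) *\<^sub>R (Hyy (z + r *\<^sub>R (0, b)) - Hyy z)) *v a) \<longlongrightarrow> DH z (0, b) *v a) (at 0)"
    using bounded_linear.tendsto[OF bl_mv_left Hyy_dir] .
  show ?thesis using lim_unique_at0[OF P] Q by (simp add: DGm_y mv_scale_diff)
qed

lemma transpose_axis: "transpose (A :: real^'m^'k) *v axis i 1 = A $ i"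
  by (simp add: vec_eq_iff matrix_vector_mult_def transpose_def axis_def if_distrib cong: if_cong)

definition LM where "LM z v = (\<chi> i. DH z (axis i 1, 0) *v v)"

lemma mixed_lim: "((\<lambda>r::real. transpose ((1 / r) *\<^sub>R (Hxy (z + r *\<^sub>R (0, v)) - Hxy z)) *v c) \<longlongrightarrow> DH z (c, 0) *v v) (at 0)"
proof -
  have P: "((\<lambda>r::real. (1 / r) *\<^sub>R (DGm (z + r *\<^sub>R (0, v)) (c, 0) - DGm z (c, 0))) \<longlongrightarrow> DH z (c, 0) *v v) (at 0)"
  proof (rule peano_mixed[where F = G and DF = DGm and DB = "\<lambda>w u. DH w u *v v"])
    show "(G has_derivative DGm w) (at w)" for w by (rule G_der)
    show "((\<lambda>w. DGm w (0, v)) has_derivative (\<lambda>u. DH w u *v v)) (at w)" for w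
      unfolding DGm_y by (rule Hyy_mv_der)
    show "isCont (\<lambda>w. DH w (c, 0) *v v) z" by (intro isCont_mv DH_cont)
  qed
  have lt: "linear (transpose :: real^'p^'n \<Rightarrow> real^'n^'p)" by (rule bounded_linear.linear[OF bl_transpose])
  have "transpose ((1 / r) *\<^sub>R (Hxy (z + r *\<^sub>R (0, v)) - Hxy z)) *v c
        = (1 / r) *\<^sub>R (DGm (z + r *\<^sub>R (0, v)) (c, 0) - DGm z (c, 0))" for r
  proof -
    have "transpose ((1 / r) *\<^sub>R (Hxy (z + r *\<^sub>R (0, v)) - Hxy z)) =
          (1 / r) *\<^sub>R (transpose (Hxy (z + r *\<^sub>R (0, v))) - transpose (Hxy z))"
      by (simp only: linear_scale[OF lt] linear_diff[OF lt])
    thus ?thesis by (simp only: mv_scale_diff DGm_x)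
  qed
  thus ?thesis using P by simp
qed

lemma Hxy_dir: "((\<lambda>r::real. (1 / r) *\<^sub>R (Hxy (z + r *\<^sub>R (0, v)) - Hxy z)) \<longlongrightarrow> LM z v) (at 0)"
proof (rule vec_tendstoI)
  fix i
  have "((\<lambda>r::real. transpose ((1 / r) *\<^sub>R (Hxy (z + r *\<^sub>R (0, v)) - Hxy z)) *v axis i 1) \<longlongrightarrow> DH z (axis i 1, 0) *v v) (at 0)"
    by (rule mixed_lim)
  thus "((\<lambda>r. ((1 / r) *\<^sub>R (Hxy (z + r *\<^sub>R (0, v)) - Hxy z)) $ i) \<longlongrightarrow> LM z v $ i) (at 0)"
    by (simp only: transpose_axis LM_def vec_lambda_beta)
qed

lemma LM_prop: "transpose (LM z v) *v c = DH z (c, 0) *v v"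
proof -
  have "((\<lambda>r::real. transpose ((1 / r) *\<^sub>R (Hxy (z + r *\<^sub>R (0, v)) - Hxy z)) *v c) \<longlongrightarrow> transpose (LM z v) *v c) (at 0)"
    using bounded_linear.tendsto[OF bl_mv_left bounded_linear.tendsto[OF bl_transpose Hxy_dir]] .
  thus ?thesis using lim_unique_at0 mixed_lim by blast
qed

lemma dd_shift: "(fst z, snd z + t *\<^sub>R d) = z + t *\<^sub>R (0, d)"
  by (simp add: prod_eq_iff)

lemma dir_deriv_Hxy: "dir_deriv_y Hxy z v = LM z v"
  unfolding dir_deriv_y_def dd_shift using tendsto_Lim[OF trivial_limit_at Hxy_dir] by simp

lemma dir_deriv_Hyy: "dir_deriv_y Hyy z v = DH z (0, v)"
  unfolding dir_deriv_y_def dd_shift using tendsto_Lim[OF trivial_limit_at Hyy_dir[of z "(0, v)"]] by simp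


definition DV where "DV z u = HI z *v (DGm z u - DH z u *v V z)"

lemma DGm_bl: "bounded_linear (DGm z)"
  using G_der has_derivative_bounded_linear by blast

lemma DH_bl: "bounded_linear (DH z)"
  unfolding DH_def by (rule blinfun.bounded_linear_right)

lemma DV_bl: "bounded_linear (DV z)"
proof -
  have "bounded_linear (\<lambda>u. DH z u *v V z)"
    using bounded_linear_compose[OF bl_mv_left DH_bl] .
  hence "bounded_linear (\<lambda>u. DGm z u - DH z u *v V z)"
    by (intro bounded_linear_sub DGm_bl)
  thus ?thesis unfolding DV_def[abs_def]
    using bounded_linear_compose[OF matrix_vector_mul_bounded_linear] by blast
qed

lemma HyyV: "Hyy z *v V z = G z"
  unfolding V_def by (rule HI_mv)

lemma V_identity:
  "V w - V z - DV z (w - z) =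
     HI w *v ((G w - G z - DGm z (w - z)) - (Hyy w - Hyy z - DH z (w - z)) *v V z)
     + HI w *v ((Hyy z - Hyy w) *v (HI z *v (DGm z (w - z) - DH z (w - z) *v V z)))"
proof -
  define h where "h = w - z"
  define Y where "Y = DGm z h - DH z h *v V z"
  have a: "HI w *v ((G w - G z - DGm z h) - (Hyy w - Hyy z - DH z h) *v V z) = V w - V z - HI w *v Y"
  proof -
    have eq1: "(G w - G z - DGm z h) - (Hyy w - Hyy z - DH z h) *v V z
          = G w - Hyy w *v V z + (Hyy z *v V z - G z) - Y"
      unfolding Y_def by (simp add: algebra_simps)
    have eq: "(G w - G z - DGm z h) - (Hyy w - Hyy z - DH z h) *v V z = G w - Hyy w *v V z - Y"
      unfolding eq1 by (simp add: HyyV)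
    have "HI w *v ((G w - G z - DGm z h) - (Hyy w - Hyy z - DH z h) *v V z)
                  = HI w *v (G w - Hyy w *v V z - Y)" by (simp only: eq)
    also have "\<dots> = HI w *v G w - HI w *v (Hyy w *v V z) - HI w *v Y"
      by (simp only: matrix_vector_mult_diff_distrib)
    also have "\<dots> = V w - V z - HI w *v Y" by (simp add: HI_mv V_def)
    finally show ?thesis .
  qed
  have b: "HI w *v ((Hyy z - Hyy w) *v (HI z *v Y)) = HI w *v Y - HI z *v Y"
    by (simp add: matrix_vector_mult_diff_rdistrib matrix_vector_mult_diff_distrib HI_mv)
  have "V w - V z - DV z h = (V w - V z - HI w *v Y) + (HI w *v Y - HI z *v Y)"
    unfolding DV_def Y_def by simp
  thus ?thesis using a b unfolding h_def Y_def by simp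
qed

lemma V_der: "(V has_derivative DV z) (at z)"
  unfolding has_derivative_iff_norm
proof (intro conjI)
  show "bounded_linear (DV z)" by (rule DV_bl)
  obtain CY where CY: "CY > 0" "\<And>h. norm (DGm z h - DH z h *v V z) \<le> norm h * CY"
  proof -
    have "bounded_linear (\<lambda>u. DGm z u - DH z u *v V z)"
      using bounded_linear_compose[OF bl_mv_left DH_bl] by (intro bounded_linear_sub DGm_bl) auto
    thus ?thesis using bounded_linear.pos_bounded that by blast
  qed
  define n1 where "n1 = (\<lambda>w. norm (G w - G z - DGm z (w - z)) / norm (w - z))"
  define n2 where "n2 = (\<lambda>w. norm (Hyy w - Hyy z - DH z (w - z)) / norm (w - z))"
  have n1: "(n1 \<longlongrightarrow> 0) (at z)" using G_der[of z] unfolding has_derivative_iff_norm n1_def by blast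
  have n2: "(n2 \<longlongrightarrow> 0) (at z)" using H'_der[of z] unfolding has_derivative_iff_norm n2_def DH_def by blast
  have n3: "((\<lambda>w. norm (Hyy w - Hyy z)) \<longlongrightarrow> 0) (at z)"
  proof -
    have "(Hyy \<longlongrightarrow> Hyy z) (at z)" using Hyy_cont isCont_def by blast
    hence "((\<lambda>w. Hyy w - Hyy z) \<longlongrightarrow> 0) (at z)" by (simp add: LIM_zero)
    thus ?thesis by (simp add: tendsto_norm_zero)
  qed
  define gb where "gb = (\<lambda>w. (n1 w + n2 w * norm (V z)) / \<mu> + CY / \<mu>\<^sup>2 * norm (Hyy w - Hyy z))"
  have gb: "(gb \<longlongrightarrow> 0) (at z)"
  proof -
    have "(gb \<longlongrightarrow> (0 + 0 * norm (V z)) / \<mu> + CY / \<mu>\<^sup>2 * 0) (at z)"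
      unfolding gb_def using mu_pos by (intro tendsto_intros n1 n2 n3) auto
    thus ?thesis by simp
  qed
  show "((\<lambda>w. norm (V w - V z - DV z (w - z)) / norm (w - z)) \<longlongrightarrow> 0) (at z)"
  proof (rule Lim_null_comparison[OF _ gb])
    show "\<forall>\<^sub>F w in at z. norm (norm (V w - V z - DV z (w - z)) / norm (w - z)) \<le> gb w"
    proof (rule eventually_mono[OF eventually_at_ball'[OF zero_less_one, of z UNIV]])
      fix w assume "w \<in> ball z 1 \<and> w \<noteq> z \<and> w \<in> UNIV"
      hence wz: "w \<noteq> z" by simp
      define h where "h = w - z"
      have nh: "norm h > 0" using wz unfolding h_def by simp
      define Y where "Y = DGm z h - DH z h *v V z"
      define E1 where "E1 = G w - G z - DGm z h"
      define E2 where "E2 = Hyy w - Hyy z - DH z h"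
      have "norm (V w - V z - DV z h) \<le> norm (HI w *v (E1 - E2 *v V z)) + norm (HI w *v ((Hyy z - Hyy w) *v (HI z *v Y)))"
        using V_identity[of w z] norm_triangle_ineq unfolding h_def E1_def E2_def Y_def by simp
      also have "\<dots> \<le> (norm E1 + norm E2 * norm (V z)) / \<mu> + norm (Hyy w - Hyy z) * norm Y / \<mu>\<^sup>2"
      proof (rule add_mono)
        have "norm (HI w *v (E1 - E2 *v V z)) \<le> norm (E1 - E2 *v V z) / \<mu>" by (rule HI_bound)
        also have "\<dots> \<le> (norm E1 + norm E2 * norm (V z)) / \<mu>"
          using mu_pos norm_triangle_ineq4[of E1 "E2 *v V z"] norm_mv_le[of E2 "V z"]
          by (intro divide_right_mono) auto
        finally show "norm (HI w *v (E1 - E2 *v V z)) \<le> (norm E1 + norm E2 * norm (V z)) / \<mu>" .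
        have "norm (HI w *v ((Hyy z - Hyy w) *v (HI z *v Y))) \<le> norm ((Hyy z - Hyy w) *v (HI z *v Y)) / \<mu>" by (rule HI_bound)
        also have "\<dots> \<le> norm (Hyy z - Hyy w) * (norm Y / \<mu>) / \<mu>"
        proof -
          have "norm ((Hyy z - Hyy w) *v (HI z *v Y)) \<le> norm (Hyy z - Hyy w) * (norm Y / \<mu>)"
            by (rule order_trans[OF norm_mv_le mult_left_mono[OF HI_bound norm_ge_zero]])
          thus ?thesis using mu_pos by (intro divide_right_mono) auto
        qed
        also have "\<dots> = norm (Hyy w - Hyy z) * norm Y / \<mu>\<^sup>2" by (simp add: norm_minus_commute power2_eq_square)
        finally show "norm (HI w *v ((Hyy z - Hyy w) *v (HI z *v Y))) \<le> norm (Hyy w - Hyy z) * norm Y / \<mu>\<^sup>2" .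
      qed
      also have "\<dots> \<le> (norm E1 + norm E2 * norm (V z)) / \<mu> + norm (Hyy w - Hyy z) * (norm h * CY) / \<mu>\<^sup>2"
        using CY(2)[of h] mu_pos unfolding Y_def by (intro add_left_mono divide_right_mono mult_left_mono) auto
      finally have "norm (V w - V z - DV z h) / norm h \<le>
          ((norm E1 + norm E2 * norm (V z)) / \<mu> + norm (Hyy w - Hyy z) * (norm h * CY) / \<mu>\<^sup>2) / norm h"
        using nh by (intro divide_right_mono) auto
      also have "\<dots> = gb w"
        unfolding gb_def n1_def n2_def E1_def E2_def h_def using nh mu_pos unfolding h_def
        by (simp add: field_simps)
      finally have "norm (V w - V z - DV z (w - z)) / norm (w - z) \<le> gb w" unfolding h_def .
      thus "norm (norm (V w - V z - DV z (w - z)) / norm (w - z)) \<le> gb w" by simp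
    qed
  qed
qed


definition Phi where "Phi z = (fst z, Amap Dg Hyy z)"
definition DPhi where "DPhi z u = (fst u, snd u - DV z u)"
definition Mop where "Mop z d = (fst d + JAx Dg Hxy Hyy z *v snd d, JAy Dg Hyy z *v snd d)"
definition psi where "psi \<beta> z = \<beta> / 2 * (norm (G z))\<^sup>2"
definition gpsi where "gpsi \<beta> z = (\<beta> *\<^sub>R (Hxy z *v G z), \<beta> *\<^sub>R (Hyy z *v G z))"

lemma Amap_eq: "Amap Dg Hyy z = snd z - V z"
  by (simp add: Amap_def V_def HI_def G_def)

lemma Phi_eq: "Phi = (\<lambda>z. (fst z, snd z - V z))"
  by (simp add: Phi_def[abs_def] Amap_eq)

lemma Phi_der: "(Phi has_derivative DPhi z) (at z)"
  unfolding Phi_eq DPhi_def[abs_def]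
  by (auto intro!: derivative_eq_intros V_der)

lemma JAx_eq: "JAx Dg Hxy Hyy z = - (Hxy z ** HI z) + LM z (V z) ** HI z"
  by (simp add: JAx_def dir_deriv_Hxy HI_def[symmetric] G_def[symmetric] V_def[symmetric])

lemma JAy_eq: "JAy Dg Hyy z = DH z (0, V z) ** HI z"
  by (simp add: JAy_def dir_deriv_Hyy HI_def[symmetric] G_def[symmetric] V_def[symmetric])

lemma adjoint: "DPhi z u \<bullet> d = u \<bullet> Mop z d"
proof -
  obtain ux uy where u: "u = (ux, uy)" by force
  obtain dx dy where d: "d = (dx, dy)" by force
  define q where "q = HI z *v dy"
  have Hq: "Hyy z *v q = dy" unfolding q_def by (rule HI_mv)
  define X where "X = DGm z u - DH z u *v V z"
  have DVd: "DV z u \<bullet> dy = X \<bullet> q"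
    unfolding DV_def X_def q_def by (simp only: inner_commute[of "HI z *v _"] inner_mv_transpose HI_sym)
  have DHsplit: "DH z u = DH z (ux, 0) + DH z (0, uy)"
  proof -
    have "u = (ux, 0) + (0, uy)" using u by simp
    thus ?thesis using linear_add[OF DH_lin] by metis
  qed
  have t1: "(transpose (Hxy z) *v ux) \<bullet> q = ux \<bullet> (Hxy z *v q)"
    using inner_mv_transpose[of "transpose (Hxy z)" ux q] by simp
  have t2: "(Hyy z *v uy) \<bullet> q = uy \<bullet> dy"
    using inner_mv_transpose[of "Hyy z" uy q] by (simp only: Hyy_sym Hq)
  have t3: "(DH z (ux, 0) *v V z) \<bullet> q = ux \<bullet> (LM z (V z) *v q)"
    using inner_mv_transpose[of "transpose (LM z (V z))" ux q] by (simp only: transpose_transpose LM_prop)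
  have t4: "(DH z (0, uy) *v V z) \<bullet> q = uy \<bullet> (DH z (0, V z) *v q)"
    using inner_mv_transpose[of "DH z (0, V z)" uy q] by (simp only: DH_yy DH_sym)
  have X_q: "X \<bullet> q = ux \<bullet> (Hxy z *v q) + uy \<bullet> dy - ux \<bullet> (LM z (V z) *v q) - uy \<bullet> (DH z (0, V z) *v q)"
    unfolding X_def DGm_def DHsplit using t1 t2 t3 t4 u
    by (simp add: inner_add_left inner_diff_left matrix_vector_mult_add_rdistrib)
  have neg: "(- A) *v x = - (A *v x)" for A :: "real^'p^'n" and x
    by (simp add: matrix_vector_mult_def vec_eq_iff sum_negf)
  have JX: "JAx Dg Hxy Hyy z *v dy = - (Hxy z *v q) + LM z (V z) *v q"
    unfolding JAx_eq q_def by (simp add: matrix_vector_mult_add_rdistrib matrix_vector_mul_assoc[symmetric] neg matrix_vector_mult_diff_rdistrib)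
  have JY: "JAy Dg Hyy z *v dy = DH z (0, V z) *v q"
    unfolding JAy_eq q_def by (simp add: matrix_vector_mul_assoc[symmetric])
  have "DPhi z u \<bullet> d = ux \<bullet> dx + uy \<bullet> dy - DV z u \<bullet> dy"
    unfolding DPhi_def u d by (simp add: inner_diff_left)
  also have "\<dots> = ux \<bullet> dx - ux \<bullet> (Hxy z *v q) + ux \<bullet> (LM z (V z) *v q) + uy \<bullet> (DH z (0, V z) *v q)"
    unfolding DVd X_q by simp
  also have "\<dots> = u \<bullet> Mop z d"
    unfolding Mop_def u d using JX JY by (simp add: inner_add_right inner_diff_right)
  finally show ?thesis .
qed

lemma psi_der: "(psi \<beta> has_derivative (\<lambda>u. gpsi \<beta> z \<bullet> u)) (at z)"
proof -
  have e: "psi \<beta> = (\<lambda>z. \<beta> / 2 * (G z \<bullet> G z))" by (simp add: psi_def[abs_def] dot_square_norm)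
  have "((\<lambda>z. \<beta> / 2 * (G z \<bullet> G z)) has_derivative (\<lambda>h. \<beta> / 2 * (G z \<bullet> DGm z h + DGm z h \<bullet> G z))) (at z)"
    by (intro has_derivative_mult_right has_derivative_inner G_der)
  moreover have "(\<lambda>h. \<beta> / 2 * (G z \<bullet> DGm z h + DGm z h \<bullet> G z)) = (\<lambda>u. gpsi \<beta> z \<bullet> u)"
  proof
    fix h :: "(real^'n) \<times> (real^'p)"
    obtain hx hy where h: "h = (hx, hy)" by force
    have a: "DGm z h \<bullet> G z = hx \<bullet> (Hxy z *v G z) + hy \<bullet> (Hyy z *v G z)"
    proof -
      have "(transpose (Hxy z) *v hx) \<bullet> G z = hx \<bullet> (Hxy z *v G z)"
        using inner_mv_transpose[of "transpose (Hxy z)" hx "G z"] by simp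
      moreover have "(Hyy z *v hy) \<bullet> G z = hy \<bullet> (Hyy z *v G z)"
        using inner_mv_transpose[of "Hyy z" hy "G z"] by (simp only: Hyy_sym)
      ultimately show ?thesis unfolding DGm_def h by (simp add: inner_add_left)
    qed
    show "\<beta> / 2 * (G z \<bullet> DGm z h + DGm z h \<bullet> G z) = gpsi \<beta> z \<bullet> h"
      unfolding gpsi_def h inner_commute[of "G z"] using a h by (simp add: inner_commute algebra_simps)
  qed
  ultimately show ?thesis unfolding e by simp
qed

lemma Dh_form: "Dh Df Dg Hxy Hyy \<beta> z = (\<lambda>v. Mop z v + gpsi \<beta> z) ` Df (Phi z)"
proof -
  have "(\<lambda>(dx, dy). (dx + JAx Dg Hxy Hyy z *v dy + \<beta> *\<^sub>R (Hxy z *v snd (Dg z)),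
                  JAy Dg Hyy z *v dy + \<beta> *\<^sub>R (Hyy z *v snd (Dg z)))) = (\<lambda>v. Mop z v + gpsi \<beta> z)"
    by (auto simp: fun_eq_iff Mop_def gpsi_def G_def)
  thus ?thesis unfolding Dh_def Phi_def by simp
qed

lemma norm_snd_le': "norm (snd p) \<le> norm p"
  by (metis norm_snd_le prod.collapse)

lemma norm_fst_le': "norm (fst p) \<le> norm p"
  by (metis norm_fst_le prod.collapse)

lemma Lg_nonneg: "Lg \<ge> 0" using grad_lip lipschitz_on_nonneg by blast
lemma Qg_nonneg: "Qg \<ge> 0" using Hyy_lip lipschitz_on_nonneg by blast

lemma G_lip: "norm (G w - G z) \<le> Lg * norm (w - z)"
proof -
  have "dist (Dg w) (Dg z) \<le> Lg * dist w z" using grad_lip lipschitz_onD by blast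
  moreover have "norm (G w - G z) \<le> norm (Dg w - Dg z)"
    unfolding G_def using norm_snd_le'[of "Dg w - Dg z"] by simp
  ultimately show ?thesis by (simp add: dist_norm)
qed

lemma Hyy_lipn: "norm (Hyy w - Hyy z) \<le> Qg * norm (w - z)"
  using Hyy_lip lipschitz_onD by (fastforce simp: dist_norm)

lemma V_diff: "V w - V z = HI w *v (G w - G z - (Hyy w - Hyy z) *v V z)"
  by (simp add: matrix_vector_mult_diff_distrib matrix_vector_mult_diff_rdistrib HI_mv HyyV V_def)

lemma G_bound: "norm z \<le> R \<Longrightarrow> norm (G z) \<le> norm (G 0) + Lg * R"
proof -
  assume "norm z \<le> R"
  have "norm (G z) \<le> norm (G 0) + norm (G z - G 0)" by (metis norm_triangle_sub add.commute)
  also have "\<dots> \<le> norm (G 0) + Lg * norm z" using G_lip[of z 0] by simp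
  also have "\<dots> \<le> norm (G 0) + Lg * R" using \<open>norm z \<le> R\<close> Lg_nonneg by (simp add: mult_left_mono)
  finally show ?thesis .
qed

definition LV where "LV R = (Lg + Qg * ((norm (G 0) + Lg * R) / \<mu>)) / \<mu>"

lemma V_lip: "norm w \<le> R \<Longrightarrow> norm z \<le> R \<Longrightarrow> norm (V w - V z) \<le> LV R * norm (w - z)"
proof -
  assume wR: "norm w \<le> R" and zR: "norm z \<le> R"
  have Vz: "norm (V z) \<le> (norm (G 0) + Lg * R) / \<mu>"
    using HI_bound[of z "G z"] G_bound[OF zR] mu_pos unfolding V_def
    by (meson divide_right_mono less_imp_le order_trans)
  have "norm (V w - V z) \<le> norm (G w - G z - (Hyy w - Hyy z) *v V z) / \<mu>"
    unfolding V_diff by (rule HI_bound)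
  also have "\<dots> \<le> (Lg * norm (w - z) + Qg * norm (w - z) * ((norm (G 0) + Lg * R) / \<mu>)) / \<mu>"
  proof (rule divide_right_mono)
    have "norm ((Hyy w - Hyy z) *v V z) \<le> norm (Hyy w - Hyy z) * norm (V z)" by (rule norm_mv_le)
    also have "\<dots> \<le> Qg * norm (w - z) * ((norm (G 0) + Lg * R) / \<mu>)"
      by (intro mult_mono Hyy_lipn Vz) (auto simp: Qg_nonneg)
    finally show "norm (G w - G z - (Hyy w - Hyy z) *v V z) \<le> Lg * norm (w - z) + Qg * norm (w - z) * ((norm (G 0) + Lg * R) / \<mu>)"
      using G_lip[of w z] norm_triangle_ineq4[of "G w - G z" "(Hyy w - Hyy z) *v V z"] by linarith
  qed (use mu_pos in simp)
  also have "\<dots> = LV R * norm (w - z)" unfolding LV_def by (simp add: field_simps)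
  finally show ?thesis .
qed

lemma Phi_lip: "norm w \<le> R \<Longrightarrow> norm z \<le> R \<Longrightarrow> norm (Phi w - Phi z) \<le> (2 + LV R) * norm (w - z)"
proof -
  assume wR: "norm w \<le> R" and zR: "norm z \<le> R"
  have "Phi w - Phi z = (fst (w - z), snd (w - z) - (V w - V z))"
    unfolding Phi_eq by (simp add: algebra_simps)
  hence "norm (Phi w - Phi z) \<le> norm (fst (w - z)) + norm (snd (w - z) - (V w - V z))"
    using norm_Pair_le by metis
  also have "\<dots> \<le> norm (w - z) + (norm (w - z) + LV R * norm (w - z))"
    using norm_fst_le'[of "w - z"] norm_snd_le'[of "w - z"] V_lip[OF wR zR]
      norm_triangle_ineq4[of "snd (w - z)" "V w - V z"] by linarith
  also have "\<dots> = (2 + LV R) * norm (w - z)" by (simp add: algebra_simps)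
  finally show ?thesis .
qed

lemma psi_lip: "norm w \<le> R \<Longrightarrow> norm z \<le> R \<Longrightarrow>
   \<bar>psi \<beta> w - psi \<beta> z\<bar> \<le> \<bar>\<beta>\<bar> * (norm (G 0) + Lg * R) * Lg * norm (w - z)"
proof -
  assume wR: "norm w \<le> R" and zR: "norm z \<le> R"
  define CG where "CG = norm (G 0) + Lg * R"
  have gw: "norm (G w) \<le> CG" and gz: "norm (G z) \<le> CG" using G_bound wR zR unfolding CG_def by auto
  have eq: "psi \<beta> w - psi \<beta> z = \<beta> / 2 * ((norm (G w))\<^sup>2 - (norm (G z))\<^sup>2)"
    unfolding psi_def by (simp add: right_diff_distrib)
  have "\<bar>psi \<beta> w - psi \<beta> z\<bar> = \<bar>\<beta> / 2 * ((norm (G w))\<^sup>2 - (norm (G z))\<^sup>2)\<bar>"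
    by (simp only: eq)
  also have "\<dots> = \<bar>\<beta>\<bar> / 2 * \<bar>(norm (G w))\<^sup>2 - (norm (G z))\<^sup>2\<bar>"
    by (simp add: abs_mult)
  finally have E: "\<bar>psi \<beta> w - psi \<beta> z\<bar> = \<bar>\<beta>\<bar> / 2 * \<bar>(norm (G w))\<^sup>2 - (norm (G z))\<^sup>2\<bar>" .
  have "\<bar>(norm (G w))\<^sup>2 - (norm (G z))\<^sup>2\<bar> = (norm (G w) + norm (G z)) * \<bar>norm (G w) - norm (G z)\<bar>"
  proof -
    have "(norm (G w))\<^sup>2 - (norm (G z))\<^sup>2 = (norm (G w) + norm (G z)) * (norm (G w) - norm (G z))"
      by (simp add: power2_eq_square algebra_simps)
    hence "\<bar>(norm (G w))\<^sup>2 - (norm (G z))\<^sup>2\<bar> = \<bar>norm (G w) + norm (G z)\<bar> * \<bar>norm (G w) - norm (G z)\<bar>"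
      by (simp add: abs_mult)
    thus ?thesis by simp
  qed
  also have "\<dots> \<le> (2 * CG) * (Lg * norm (w - z))"
  proof (rule mult_mono)
    show "norm (G w) + norm (G z) \<le> 2 * CG" using gw gz by simp
    have "\<bar>norm (G w) - norm (G z)\<bar> \<le> norm (G w - G z)" by (rule norm_triangle_ineq3)
    thus "\<bar>norm (G w) - norm (G z)\<bar> \<le> Lg * norm (w - z)" using G_lip[of w z] by linarith
  qed (use gw norm_ge_zero[of "G w"] in linarith)+
  finally have F: "\<bar>(norm (G w))\<^sup>2 - (norm (G z))\<^sup>2\<bar> \<le> (2 * CG) * (Lg * norm (w - z))" .
  have "\<bar>psi \<beta> w - psi \<beta> z\<bar> \<le> \<bar>\<beta>\<bar> / 2 * ((2 * CG) * (Lg * norm (w - z)))"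
    unfolding E by (rule mult_left_mono[OF F]) simp
  thus ?thesis unfolding CG_def by (simp add: algebra_simps)
qed

end



lemma ac_unfold:
  assumes "abs_cont_on_interval a b \<gamma>" "\<epsilon> > 0"
  obtains d where "d > 0" "\<And>(m::nat) s t.
        (\<forall>i<m. a \<le> s i \<and> s i \<le> t i \<and> t i \<le> b) \<Longrightarrow>
        (\<forall>i<m. \<forall>j<m. i \<noteq> j \<longrightarrow> t i \<le> s j \<or> t j \<le> s i) \<Longrightarrow>
        (\<Sum>i<m. t i - s i) < d
        \<Longrightarrow> (\<Sum>i<m. norm (\<gamma> (t i) - \<gamma> (s i))) < \<epsilon>"
proof -
  have "\<exists>d>0. \<forall>(m::nat) (s::nat \<Rightarrow> real) (t::nat \<Rightarrow> real).
        (\<forall>i<m. a \<le> s i \<and> s i \<le> t i \<and> t i \<le> b) \<and>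
        (\<forall>i<m. \<forall>j<m. i \<noteq> j \<longrightarrow> t i \<le> s j \<or> t j \<le> s i) \<and>
        (\<Sum>i<m. t i - s i) < d
        \<longrightarrow> (\<Sum>i<m. norm (\<gamma> (t i) - \<gamma> (s i))) < \<epsilon>"
    using assms unfolding abs_cont_on_interval_def by blast
  thus ?thesis using that by blast
qed

lemma ac_continuous:
  fixes \<gamma> :: "real \<Rightarrow> 'a::real_normed_vector"
  assumes "abs_cont_on_interval a b \<gamma>"
  shows "continuous_on {a..b} \<gamma>"
  unfolding continuous_on_iff
proof (intro ballI allI impI)
  fix x e :: real assume x: "x \<in> {a..b}" and e: "e > 0"
  obtain d where d: "d > 0" and H: "\<And>(m::nat) s t.
        (\<forall>i<m. a \<le> s i \<and> s i \<le> t i \<and> t i \<le> b) \<Longrightarrow>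
        (\<forall>i<m. \<forall>j<m. i \<noteq> j \<longrightarrow> t i \<le> s j \<or> t j \<le> s i) \<Longrightarrow>
        (\<Sum>i<m. t i - s i) < d
        \<Longrightarrow> (\<Sum>i<m. norm (\<gamma> (t i) - \<gamma> (s i))) < e"
    using ac_unfold[OF assms e] by blast
  show "\<exists>d>0. \<forall>x'\<in>{a..b}. dist x' x < d \<longrightarrow> dist (\<gamma> x') (\<gamma> x) < e"
  proof (intro exI conjI ballI impI)
    show "d > 0" by (rule d)
    fix y assume y: "y \<in> {a..b}" and yd: "dist y x < d"
    have "(\<Sum>i<(1::nat). norm (\<gamma> ((\<lambda>_. max x y) i) - \<gamma> ((\<lambda>_. min x y) i))) < e"
      by (rule H) (use x y yd in \<open>auto simp: dist_real_def\<close>)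
    hence "norm (\<gamma> (max x y) - \<gamma> (min x y)) < e" by simp
    thus "dist (\<gamma> y) (\<gamma> x) < e"
      by (cases "x \<le> y") (auto simp: dist_norm norm_minus_commute max_def min_def)
  qed
qed

lemma ac_reparam:
  fixes \<gamma> :: "real \<Rightarrow> 'a::real_normed_vector"
  assumes ac: "abs_cont_on_interval 0 T \<gamma>" and T: "T > 0"
  shows "abs_cont_on_interval 0 1 (\<lambda>\<tau>. \<gamma> (T * (1 - \<tau>)))"
  unfolding abs_cont_on_interval_def
proof (intro allI impI)
  fix \<epsilon> :: real assume \<epsilon>: "\<epsilon> > 0"
  obtain d where d: "d > 0" and H: "\<And>(m::nat) s t.
        (\<forall>i<m. 0 \<le> s i \<and> s i \<le> t i \<and> t i \<le> T) \<Longrightarrow>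
        (\<forall>i<m. \<forall>j<m. i \<noteq> j \<longrightarrow> t i \<le> s j \<or> t j \<le> s i) \<Longrightarrow>
        (\<Sum>i<m. t i - s i) < d
        \<Longrightarrow> (\<Sum>i<m. norm (\<gamma> (t i) - \<gamma> (s i))) < \<epsilon>"
    using ac_unfold[OF ac \<epsilon>] by blast
  show "\<exists>d>0. \<forall>(m::nat) (s::nat \<Rightarrow> real) (t::nat \<Rightarrow> real).
        (\<forall>i<m. 0 \<le> s i \<and> s i \<le> t i \<and> t i \<le> 1) \<and>
        (\<forall>i<m. \<forall>j<m. i \<noteq> j \<longrightarrow> t i \<le> s j \<or> t j \<le> s i) \<and>
        (\<Sum>i<m. t i - s i) < d
        \<longrightarrow> (\<Sum>i<m. norm (\<gamma> (T * (1 - t i)) - \<gamma> (T * (1 - s i)))) < \<epsilon>"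
  proof (intro exI conjI allI impI)
    show "d / T > 0" using d T by simp
    fix m :: nat and s t :: "nat \<Rightarrow> real"
    assume A: "(\<forall>i<m. 0 \<le> s i \<and> s i \<le> t i \<and> t i \<le> 1) \<and>
        (\<forall>i<m. \<forall>j<m. i \<noteq> j \<longrightarrow> t i \<le> s j \<or> t j \<le> s i) \<and>
        (\<Sum>i<m. t i - s i) < d / T"
    define s' where "s' i = T * (1 - t i)" for i
    define t' where "t' i = T * (1 - s i)" for i
    have "(\<Sum>i<m. norm (\<gamma> (t' i) - \<gamma> (s' i))) < \<epsilon>"
    proof (rule H)
      show "\<forall>i<m. 0 \<le> s' i \<and> s' i \<le> t' i \<and> t' i \<le> T"
        using A T unfolding s'_def t'_def by (auto simp: mult_left_mono)
      show "\<forall>i<m. \<forall>j<m. i \<noteq> j \<longrightarrow> t' i \<le> s' j \<or> t' j \<le> s' i"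
      proof (intro allI impI)
        fix i j assume ij: "i < m" "j < m" "i \<noteq> j"
        hence "t i \<le> s j \<or> t j \<le> s i" using A by blast
        thus "t' i \<le> s' j \<or> t' j \<le> s' i"
          unfolding s'_def t'_def using T by (auto simp: mult_left_mono)
      qed
      have "(\<Sum>i<m. t' i - s' i) = T * (\<Sum>i<m. t i - s i)"
        unfolding s'_def t'_def by (simp add: sum_distrib_left algebra_simps)
      also have "\<dots> < T * (d / T)" using A T by (intro mult_strict_left_mono) auto
      also have "\<dots> = d" using T by simp
      finally show "(\<Sum>i<m. t' i - s' i) < d" .
    qed
    thus "(\<Sum>i<m. norm (\<gamma> (T * (1 - t i)) - \<gamma> (T * (1 - s i)))) < \<epsilon>"
      unfolding s'_def t'_def by (simp add: norm_minus_commute)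
  qed
qed

lemma ac_lip_comp:
  fixes \<gamma> :: "real \<Rightarrow> 'a::real_normed_vector" and \<phi> :: "'a \<Rightarrow> 'b::real_normed_vector"
  assumes ac: "abs_cont_on_interval a b \<gamma>" and L: "L \<ge> 0"
    and lip: "\<And>x y. x \<in> {a..b} \<Longrightarrow> y \<in> {a..b} \<Longrightarrow> norm (\<phi> (\<gamma> x) - \<phi> (\<gamma> y)) \<le> L * norm (\<gamma> x - \<gamma> y)"
  shows "abs_cont_on_interval a b (\<lambda>x. \<phi> (\<gamma> x))"
  unfolding abs_cont_on_interval_def
proof (intro allI impI)
  fix \<epsilon> :: real assume \<epsilon>: "\<epsilon> > 0"
  have e': "\<epsilon> / (L + 1) > 0" using \<epsilon> L by simp
  obtain d where d: "d > 0" and H: "\<And>(m::nat) s t.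
        (\<forall>i<m. a \<le> s i \<and> s i \<le> t i \<and> t i \<le> b) \<Longrightarrow>
        (\<forall>i<m. \<forall>j<m. i \<noteq> j \<longrightarrow> t i \<le> s j \<or> t j \<le> s i) \<Longrightarrow>
        (\<Sum>i<m. t i - s i) < d
        \<Longrightarrow> (\<Sum>i<m. norm (\<gamma> (t i) - \<gamma> (s i))) < \<epsilon> / (L + 1)"
    using ac_unfold[OF ac e'] by blast
  show "\<exists>d>0. \<forall>(m::nat) (s::nat \<Rightarrow> real) (t::nat \<Rightarrow> real).
        (\<forall>i<m. a \<le> s i \<and> s i \<le> t i \<and> t i \<le> b) \<and>
        (\<forall>i<m. \<forall>j<m. i \<noteq> j \<longrightarrow> t i \<le> s j \<or> t j \<le> s i) \<and>
        (\<Sum>i<m. t i - s i) < d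
        \<longrightarrow> (\<Sum>i<m. norm (\<phi> (\<gamma> (t i)) - \<phi> (\<gamma> (s i)))) < \<epsilon>"
  proof (intro exI conjI allI impI)
    show "d > 0" by (rule d)
    fix m :: nat and s t :: "nat \<Rightarrow> real"
    assume A: "(\<forall>i<m. a \<le> s i \<and> s i \<le> t i \<and> t i \<le> b) \<and>
        (\<forall>i<m. \<forall>j<m. i \<noteq> j \<longrightarrow> t i \<le> s j \<or> t j \<le> s i) \<and>
        (\<Sum>i<m. t i - s i) < d"
    have S: "(\<Sum>i<m. norm (\<gamma> (t i) - \<gamma> (s i))) < \<epsilon> / (L + 1)" using H A by blast
    have "(\<Sum>i<m. norm (\<phi> (\<gamma> (t i)) - \<phi> (\<gamma> (s i)))) \<le> (\<Sum>i<m. L * norm (\<gamma> (t i) - \<gamma> (s i)))"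
      using A by (intro sum_mono lip) auto
    also have "\<dots> = L * (\<Sum>i<m. norm (\<gamma> (t i) - \<gamma> (s i)))" by (simp add: sum_distrib_left)
    also have "\<dots> \<le> L * (\<epsilon> / (L + 1))" using S L by (intro mult_left_mono) auto
    also have "\<dots> < \<epsilon>" using \<epsilon> L by (simp add: field_simps)
    finally show "(\<Sum>i<m. norm (\<phi> (\<gamma> (t i)) - \<phi> (\<gamma> (s i)))) < \<epsilon>" .
  qed
qed




lemma sup_affine:
  fixes \<phi> :: "'a \<Rightarrow> real"
  assumes X: "X \<noteq> {}" and bdd: "bdd_above (\<phi> ` X)" and c: "c > 0"
  shows "Sup ((\<lambda>v. c * \<phi> v + d) ` X) = c * Sup (\<phi> ` X) + d"
proof (rule antisym)
  show "Sup ((\<lambda>v. c * \<phi> v + d) ` X) \<le> c * Sup (\<phi> ` X) + d"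
  proof (rule cSup_least)
    show "(\<lambda>v. c * \<phi> v + d) ` X \<noteq> {}" using X by simp
    fix y assume "y \<in> (\<lambda>v. c * \<phi> v + d) ` X"
    then obtain v where v: "v \<in> X" "y = c * \<phi> v + d" by blast
    have "\<phi> v \<le> Sup (\<phi> ` X)" using cSup_upper[OF imageI[OF v(1)] bdd] .
    thus "y \<le> c * Sup (\<phi> ` X) + d" using v c by (simp add: mult_left_mono)
  qed
  have bdd2: "bdd_above ((\<lambda>v. c * \<phi> v + d) ` X)"
  proof -
    obtain M where "\<And>v. v \<in> X \<Longrightarrow> \<phi> v \<le> M" using bdd unfolding bdd_above_def by auto
    hence "\<And>v. v \<in> X \<Longrightarrow> c * \<phi> v + d \<le> c * M + d" using c by (simp add: mult_left_mono)
    thus ?thesis unfolding bdd_above_def by blast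
  qed
  have "Sup (\<phi> ` X) \<le> (Sup ((\<lambda>v. c * \<phi> v + d) ` X) - d) / c"
  proof (rule cSup_least)
    show "\<phi> ` X \<noteq> {}" using X by simp
    fix y assume "y \<in> \<phi> ` X"
    then obtain v where v: "v \<in> X" "y = \<phi> v" by blast
    have "c * \<phi> v + d \<le> Sup ((\<lambda>v. c * \<phi> v + d) ` X)" using cSup_upper[OF _ bdd2] v(1) by blast
    thus "y \<le> (Sup ((\<lambda>v. c * \<phi> v + d) ` X) - d) / c" using v c by (simp add: field_simps)
  qed
  thus "c * Sup (\<phi> ` X) + d \<le> Sup ((\<lambda>v. c * \<phi> v + d) ` X)" using c by (simp add: field_simps)
qed

lemma vd_comp:
  fixes c :: "real \<Rightarrow> 'a::real_normed_vector" and F :: "'a \<Rightarrow> 'b::real_normed_vector"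
  assumes "(c has_vector_derivative v) (at x)" and "(F has_derivative F') (at (c x))"
  shows "((\<lambda>s. F (c s)) has_vector_derivative F' v) (at x)"
proof -
  have "((\<lambda>s. F (c s)) has_derivative (\<lambda>h. F' (h *\<^sub>R v))) (at x)"
    using has_derivative_compose[OF assms(1)[unfolded has_vector_derivative_def] assms(2)] by (simp add: o_def)
  moreover have "linear F'" using assms(2) has_derivative_linear by blast
  ultimately show ?thesis unfolding has_vector_derivative_def by (simp add: linear_scale)
qed

lemma affine_image_01:
  assumes "t > 0"
  shows "(\<lambda>x::real. (1 / (- 1 / t)) *\<^sub>R x + - ((1 / (- 1 / t)) *\<^sub>R 1)) ` cbox 0 1 = {0..t}"
proof -
  have e: "(\<lambda>x::real. (1 / (- 1 / t)) *\<^sub>R x + - ((1 / (- 1 / t)) *\<^sub>R 1)) = (\<lambda>x. t * (1 - x))"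
    by (auto simp: fun_eq_iff algebra_simps)
  show ?thesis unfolding e
  proof
    show "(\<lambda>x. t * (1 - x)) ` cbox 0 1 \<subseteq> {0..t}" using assms by (auto simp: mult_le_cancel_left1)
    show "{0..t} \<subseteq> (\<lambda>x. t * (1 - x)) ` cbox 0 1"
    proof
      fix y assume y: "y \<in> {0..t}"
      have "y = t * (1 - (1 - y / t))" using assms by simp
      moreover have "1 - y / t \<in> cbox 0 1" using y assms by auto
      ultimately show "y \<in> (\<lambda>x. t * (1 - x)) ` cbox 0 1" by blast
    qed
  qed
qed

theorem proposition4p1:
  fixes f :: "(real^'n) \<times> (real^'p) \<Rightarrow> real"
    and Df :: "(real^'n) \<times> (real^'p) \<Rightarrow> ((real^'n) \<times> (real^'p)) set"
    and g :: "(real^'n) \<times> (real^'p) \<Rightarrow> real"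
    and Dg :: "(real^'n) \<times> (real^'p) \<Rightarrow> (real^'n) \<times> (real^'p)"
    and Hxy :: "(real^'n) \<times> (real^'p) \<Rightarrow> real^'p^'n"
    and Hyy :: "(real^'n) \<times> (real^'p) \<Rightarrow> real^'p^'p"
    and Mf \<mu> Lg Qg \<beta> \<delta> :: real
    and x :: "nat \<Rightarrow> real^'n" and y :: "nat \<Rightarrow> real^'p"
    and \<eta> :: "nat \<Rightarrow> real"
    and ux \<xi>x :: "nat \<Rightarrow> real^'n" and uy \<xi>y :: "nat \<Rightarrow> real^'p"
    and D :: "(real^'n) \<times> (real^'p) \<Rightarrow> ((real^'n) \<times> (real^'p)) set"
    and \<gamma> :: "real \<Rightarrow> (real^'n) \<times> (real^'p)"
  assumes consts_pos: "Mf > 0" "\<mu> > 0" "Lg > 0" "Qg > 0"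
    and f_lip: "Mf-lipschitz_on UNIV f"
    and g_grad: "\<And>z. (g has_derivative (\<lambda>d. Dg z \<bullet> d)) (at z)"
    and g_twice: "\<And>z. Dg differentiable (at z)"
    and g_hess: "\<And>z. ((\<lambda>w. snd (Dg w)) has_derivative
                       (\<lambda>d. transpose (Hxy z) *v fst d + Hyy z *v snd d)) (at z)"
    and strong_convex: "\<And>z v. \<mu> * (norm v)\<^sup>2 \<le> v \<bullet> (Hyy z *v v)"
    and grad_lip: "Lg-lipschitz_on UNIV Dg"
    and Hyy_lip: "Qg-lipschitz_on UNIV Hyy"
    and Hxy_lip: "Qg-lipschitz_on UNIV Hxy"
    and Hyy_C1: "\<exists>H'. (\<forall>z. (Hyy has_derivative blinfun_apply (H' z)) (at z)) \<and> continuous_on UNIV H'"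
    and Df_cons: "conservative_field Df"
    and f_pot: "is_potential f Df"
    and Df_vals: "\<And>z. convex (Df z) \<and> (\<forall>v\<in>Df z. norm v \<le> Mf)"
    and beta_pos: "\<beta> > 0"
    and delta_pos: "\<delta> > 0"
    and iter_x: "\<And>k. x (Suc k) = x k - \<eta> k *\<^sub>R (ux k + \<xi>x k)"
    and iter_y: "\<And>k. y (Suc k) = y k - \<eta> k *\<^sub>R (uy k + \<xi>y k)"
    and cond_a: "bdd_above (range (\<lambda>k. norm (x k) + norm (y k)))"
    and cond_b: "\<And>k. \<eta> k > 0" "filterlim (\<lambda>N. \<Sum>k\<le>N. \<eta> k) at_top sequentially"
                "summable (\<lambda>k. (\<eta> k)\<^sup>2)"
    and cond_c: "summable (\<lambda>k. \<eta> k *\<^sub>R \<xi>x k)" "summable (\<lambda>k. \<eta> k *\<^sub>R \<xi>y k)"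
    and cond_d: "closed {(z, v). v \<in> D z}" "\<And>z. compact (D z) \<and> convex (D z)"
                "\<And>(kk::nat \<Rightarrow> nat) xt yt. strict_mono kk \<Longrightarrow>
                    ((\<lambda>j. (x (kk j), y (kk j))) \<longlongrightarrow> (xt, yt)) sequentially \<Longrightarrow>
                    (\<forall>\<epsilon>>0. \<forall>\<^sub>F N in sequentially. \<exists>v\<in>D (xt, yt).
                       dist ((1 / real N) *\<^sub>R (\<Sum>j=1..N. (ux (kk j), uy (kk j)))) v < \<epsilon>)"
    and cond_e: "interior {hfun f Dg Hyy \<beta> z | z. 0 \<in> D z} = {}"
    and cond_f: "\<And>z w. w \<in> D z \<Longrightarrow>
                   Sup ((\<lambda>\<zeta>. \<zeta> \<bullet> w) ` Dh Df Dg Hxy Hyy \<beta> z) \<ge> \<delta> * (norm w)\<^sup>2"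
    and gamma_ac: "\<And>T. T \<ge> 0 \<Longrightarrow> abs_cont_on_interval 0 T \<gamma>"
    and gamma_incl: "AE t in lborel. t > 0 \<longrightarrow>
                       (\<exists>v. (\<gamma> has_vector_derivative v) (at t) \<and> v \<in> uminus ` D (\<gamma> t))"
  shows "\<forall>t>0. ereal (hfun f Dg Hyy \<beta> (\<gamma> t) - hfun f Dg Hyy \<beta> (\<gamma> 0))
            \<le> - (ereal \<delta> * enn2ereal (\<integral>\<^sup>+ \<tau>. ennreal ((infdist 0 (D (\<gamma> \<tau>)))\<^sup>2) * indicator {0..t} \<tau> \<partial>lborel))"
proof (intro allI impI)
  fix t :: real assume t: "t > 0"
  obtain H' where H'1: "\<And>z. (Hyy has_derivative blinfun_apply (H' z)) (at z)" and H'2: "continuous_on UNIV H'"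
    using Hyy_C1 by blast
  interpret B: bl g Dg Hxy Hyy \<mu> Lg Qg H'
    by (unfold_locales) (use consts_pos g_grad g_hess strong_convex grad_lip Hyy_lip Hxy_lip H'1 H'2 in auto)
  have Dfc: "\<And>z. Df z \<noteq> {} \<and> compact (Df z)" using Df_cons unfolding conservative_field_def by blast
  obtain N0 where N0: "{x \<in> space lborel. \<not> (x > 0 \<longrightarrow> (\<exists>v. (\<gamma> has_vector_derivative v) (at x) \<and> v \<in> uminus ` D (\<gamma> x)))} \<subseteq> N0"
    "emeasure lborel N0 = 0" "N0 \<in> sets lborel"
    using gamma_incl by (rule AE_E)
  define N where "N = N0 \<union> {0, t}"
  have N0null: "N0 \<in> null_sets lborel" using N0 by (simp add: null_setsI)
  have Nnull: "N \<in> null_sets lborel"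
  proof -
    have h0: "{0, t} \<in> null_sets lborel" by (simp add: countable_imp_null_set_lborel)
    show ?thesis unfolding N_def by (rule null_sets.Un[OF N0null h0])
  qed
  have Nneg: "negligible N"
    using Nnull negligible_iff_null_sets null_sets_completionI by blast
  define gd where "gd \<sigma> = vector_derivative \<gamma> (at \<sigma>)" for \<sigma>
  have good: "(\<gamma> has_vector_derivative gd \<sigma>) (at \<sigma>) \<and> - gd \<sigma> \<in> D (\<gamma> \<sigma>)" if "\<sigma> \<in> {0..t} - N" for \<sigma>
  proof -
    have "\<sigma> > 0" "\<sigma> \<notin> N0" using that unfolding N_def by auto
    have "\<exists>v. (\<gamma> has_vector_derivative v) (at \<sigma>) \<and> v \<in> uminus ` D (\<gamma> \<sigma>)"
    proof (rule ccontr)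
      assume "\<not> ?thesis"
      hence "\<sigma> \<in> {x \<in> space lborel. \<not> (x > 0 \<longrightarrow> (\<exists>v. (\<gamma> has_vector_derivative v) (at x) \<and> v \<in> uminus ` D (\<gamma> x)))}"
        using \<open>\<sigma> > 0\<close> by simp
      thus False using N0(1) \<open>\<sigma> \<notin> N0\<close> by blast
    qed
    then obtain v where v: "(\<gamma> has_vector_derivative v) (at \<sigma>)" "v \<in> uminus ` D (\<gamma> \<sigma>)" by blast
    have "gd \<sigma> = v" unfolding gd_def using vector_derivative_at[OF v(1)] .
    moreover have "- v \<in> D (\<gamma> \<sigma>)" using v(2) by auto
    ultimately show ?thesis using v(1) by simp
  qed
  have acT: "abs_cont_on_interval 0 t \<gamma>" using gamma_ac t by simp
  have "compact (\<gamma> ` {0..t})" using ac_continuous[OF acT] by (intro compact_continuous_image) auto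
  from compact_imp_bounded[OF this] obtain R0 where R0': "\<forall>x\<in>\<gamma> ` {0..t}. norm x \<le> R0"
    unfolding bounded_iff by blast
  hence R0: "\<And>x. x \<in> \<gamma> ` {0..t} \<Longrightarrow> norm x \<le> R0" by blast
  define R where "R = max R0 0"
  have R: "R \<ge> 0" "\<And>\<sigma>. \<sigma> \<in> {0..t} \<Longrightarrow> norm (\<gamma> \<sigma>) \<le> R"
  proof -
    show "R \<ge> 0" unfolding R_def by simp
    fix \<sigma> :: real assume "\<sigma> \<in> {0..t}"
    hence "norm (\<gamma> \<sigma>) \<le> R0" using R0 by blast
    thus "norm (\<gamma> \<sigma>) \<le> R" unfolding R_def by simp
  qed
  have LV0: "B.LV R \<ge> 0"
    unfolding B.LV_def using R B.Lg_nonneg B.Qg_nonneg B.mu_pos by (simp add: divide_nonneg_pos)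
  \<comment> \<open>the f-part via the potential on the reversed reparametrised curve\<close>
  define r where "r \<tau> = B.Phi (\<gamma> (t * (1 - \<tau>)))" for \<tau>
  have acr: "abs_cont_on_interval 0 1 r"
  proof -
    have ac1: "abs_cont_on_interval 0 1 (\<lambda>\<tau>. \<gamma> (t * (1 - \<tau>)))" by (rule ac_reparam[OF acT t])
    have lp: "\<And>x y. x \<in> {0..1} \<Longrightarrow> y \<in> {0..1} \<Longrightarrow>
        norm (B.Phi (\<gamma> (t * (1 - x))) - B.Phi (\<gamma> (t * (1 - y)))) \<le> (2 + B.LV R) * norm (\<gamma> (t * (1 - x)) - \<gamma> (t * (1 - y)))"
    proof -
      fix x y :: real assume "x \<in> {0..1}" "y \<in> {0..1}"
      hence "t * (1 - x) \<in> {0..t}" "t * (1 - y) \<in> {0..t}" using t by (auto simp: mult_le_cancel_left1)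
      thus "norm (B.Phi (\<gamma> (t * (1 - x))) - B.Phi (\<gamma> (t * (1 - y)))) \<le> (2 + B.LV R) * norm (\<gamma> (t * (1 - x)) - \<gamma> (t * (1 - y)))"
        using B.Phi_lip R(2) by blast
    qed
    have L0: "2 + B.LV R \<ge> 0" using LV0 by simp
    have "abs_cont_on_interval 0 1 (\<lambda>x. B.Phi ((\<lambda>\<tau>. \<gamma> (t * (1 - \<tau>))) x))"
      by (rule ac_lip_comp[where \<phi> = B.Phi and \<gamma> = "\<lambda>\<tau>. \<gamma> (t * (1 - \<tau>))", OF ac1 L0 lp])
    thus ?thesis unfolding r_def[abs_def] by simp
  qed
  define S where "S \<tau> = Sup ((\<lambda>v. vector_derivative r (at \<tau>) \<bullet> v) ` Df (r \<tau>))" for \<tau>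
  have IS: "(S has_integral f (r 1) - f (r 0)) {0..1}"
    unfolding S_def by (rule f_pot[unfolded is_potential_def, rule_format, OF acr])
  have I1: "((\<lambda>\<sigma>. S (1 - \<sigma> / t)) has_integral t * (f (B.Phi (\<gamma> 0)) - f (B.Phi (\<gamma> t)))) {0..t}"
  proof -
    have "((\<lambda>x. S ((- 1 / t) *\<^sub>R x + 1)) has_integral (1 / \<bar>- 1 / t\<bar> ^ DIM(real)) *\<^sub>R (f (r 1) - f (r 0)))
          ((\<lambda>x. (1 / (- 1 / t)) *\<^sub>R x + - ((1 / (- 1 / t)) *\<^sub>R 1)) ` cbox 0 1)"
      using IS t by (intro has_integral_affinity) auto
    thus ?thesis unfolding affine_image_01[OF t] r_def using t by (simp add: algebra_simps)
  qed
  define J where "J \<sigma> = Sup ((\<lambda>\<zeta>. \<zeta> \<bullet> (- gd \<sigma>)) ` Dh Df Dg Hxy Hyy \<beta> (\<gamma> \<sigma>))" for \<sigma>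
  have Mop_bl: "bounded_linear (B.Mop z)" for z
  proof -
    have m1: "bounded_linear (\<lambda>d::(real^'n) \<times> (real^'p). JAx Dg Hxy Hyy z *v snd d)"
      by (rule bounded_linear_compose[OF matrix_vector_mul_bounded_linear bounded_linear_snd])
    have m2: "bounded_linear (\<lambda>d::(real^'n) \<times> (real^'p). JAy Dg Hyy z *v snd d)"
      by (rule bounded_linear_compose[OF matrix_vector_mul_bounded_linear bounded_linear_snd])
    have "bounded_linear (\<lambda>d::(real^'n) \<times> (real^'p). (fst d + JAx Dg Hxy Hyy z *v snd d, JAy Dg Hyy z *v snd d))"
      by (intro bounded_linear_Pair bounded_linear_add bounded_linear_fst m1 m2)
    thus ?thesis unfolding B.Mop_def[abs_def] .
  qed
  have bddM: "bdd_above ((\<lambda>v. w \<bullet> B.Mop z v) ` Df y)" for w z y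
  proof -
    have "continuous_on (Df y) (\<lambda>v. w \<bullet> B.Mop z v)"
      using bounded_linear_compose[OF bounded_linear_inner_right Mop_bl] linear_continuous_on by blast
    hence "compact ((\<lambda>v. w \<bullet> B.Mop z v) ` Df y)" using Dfc by (intro compact_continuous_image) auto
    thus ?thesis by (intro bounded_imp_bdd_above compact_imp_bounded)
  qed
  have Sgood: "S (1 - \<sigma> / t) = t * (J \<sigma> - B.gpsi \<beta> (\<gamma> \<sigma>) \<bullet> (- gd \<sigma>))" if \<sigma>: "\<sigma> \<in> {0..t} - N" for \<sigma>
  proof -
    define w where "w = - gd \<sigma>"
    define X where "X = Df (B.Phi (\<gamma> \<sigma>))"
    have gs: "(\<gamma> has_vector_derivative gd \<sigma>) (at \<sigma>)" using good[OF \<sigma>] by blast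
    have ts: "t * (1 - (1 - \<sigma> / t)) = \<sigma>" using t by simp
    have aff: "((\<lambda>\<tau>. t * (1 - \<tau>)) has_vector_derivative (- t)) (at (1 - \<sigma> / t))"
      by (auto intro!: derivative_eq_intros simp: has_real_derivative_iff_has_vector_derivative[symmetric])
    have c1: "((\<lambda>\<tau>. \<gamma> (t * (1 - \<tau>))) has_vector_derivative (- t) *\<^sub>R gd \<sigma>) (at (1 - \<sigma> / t))"
      using vector_diff_chain_at[OF aff, of \<gamma> "gd \<sigma>"] gs ts by (simp add: o_def)
    have "(r has_vector_derivative B.DPhi (\<gamma> \<sigma>) ((- t) *\<^sub>R gd \<sigma>)) (at (1 - \<sigma> / t))"
      unfolding r_def using vd_comp[OF c1, of B.Phi] B.Phi_der ts by simp
    hence vd: "vector_derivative r (at (1 - \<sigma> / t)) = B.DPhi (\<gamma> \<sigma>) ((- t) *\<^sub>R gd \<sigma>)"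
      by (rule vector_derivative_at)
    have lin: "linear (B.DPhi (\<gamma> \<sigma>))" using B.Phi_der has_derivative_linear by blast
    have e1: "vector_derivative r (at (1 - \<sigma> / t)) \<bullet> v = t * (w \<bullet> B.Mop (\<gamma> \<sigma>) v) + 0" for v
    proof -
      have "B.DPhi (\<gamma> \<sigma>) ((- t) *\<^sub>R gd \<sigma>) = t *\<^sub>R B.DPhi (\<gamma> \<sigma>) w"
        unfolding w_def using linear_scale[OF lin, of "- t" "gd \<sigma>"] linear_scale[OF lin, of "- 1" "gd \<sigma>"] by simp
      thus ?thesis unfolding vd by (simp add: B.adjoint)
    qed
    have "S (1 - \<sigma> / t) = Sup ((\<lambda>v. t * (w \<bullet> B.Mop (\<gamma> \<sigma>) v) + 0) ` X)"
      unfolding S_def X_def r_def ts using e1[unfolded r_def ts] by (simp add: r_def ts)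
    also have "\<dots> = t * Sup ((\<lambda>v. w \<bullet> B.Mop (\<gamma> \<sigma>) v) ` X) + 0"
      unfolding X_def using Dfc t bddM by (intro sup_affine) auto
    finally have S1: "S (1 - \<sigma> / t) = t * Sup ((\<lambda>v. w \<bullet> B.Mop (\<gamma> \<sigma>) v) ` X)" by simp
    have "J \<sigma> = Sup ((\<lambda>v. (B.Mop (\<gamma> \<sigma>) v + B.gpsi \<beta> (\<gamma> \<sigma>)) \<bullet> w) ` X)"
      unfolding J_def B.Dh_form X_def w_def image_image by simp
    also have "\<dots> = Sup ((\<lambda>v. 1 * (w \<bullet> B.Mop (\<gamma> \<sigma>) v) + B.gpsi \<beta> (\<gamma> \<sigma>) \<bullet> w) ` X)"
      by (simp add: inner_add_left inner_add_right inner_commute)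
    also have "\<dots> = 1 * Sup ((\<lambda>v. w \<bullet> B.Mop (\<gamma> \<sigma>) v) ` X) + B.gpsi \<beta> (\<gamma> \<sigma>) \<bullet> w"
      unfolding X_def using Dfc bddM by (intro sup_affine) auto
    finally have J1: "J \<sigma> = Sup ((\<lambda>v. w \<bullet> B.Mop (\<gamma> \<sigma>) v) ` X) + B.gpsi \<beta> (\<gamma> \<sigma>) \<bullet> w" by simp
    show ?thesis unfolding S1 J1 w_def by simp
  qed
  define u where "u \<sigma> = B.psi \<beta> (\<gamma> \<sigma>)" for \<sigma>
  define u' where "u' \<sigma> = B.gpsi \<beta> (\<gamma> \<sigma>) \<bullet> gd \<sigma>" for \<sigma>
  have acu: "abs_cont_on_interval 0 t u"
  proof -
    define Lp where "Lp = \<bar>\<beta>\<bar> * (norm (B.G 0) + Lg * R) * Lg"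
    have Lp0: "Lp \<ge> 0" unfolding Lp_def using R B.Lg_nonneg by simp
    have lp: "\<And>x y. x \<in> {0..t} \<Longrightarrow> y \<in> {0..t} \<Longrightarrow>
        norm (B.psi \<beta> (\<gamma> x) - B.psi \<beta> (\<gamma> y)) \<le> Lp * norm (\<gamma> x - \<gamma> y)"
      unfolding Lp_def using B.psi_lip R(2) by simp
    have "abs_cont_on_interval 0 t (\<lambda>x. B.psi \<beta> (\<gamma> x))"
      by (rule ac_lip_comp[where \<phi> = "B.psi \<beta>" and \<gamma> = \<gamma>, OF acT Lp0 lp])
    thus ?thesis unfolding u_def[abs_def] .
  qed
  have du: "(u has_real_derivative u' x) (at x within {0..t})" if x: "x \<in> {0..t} - N" for x
  proof -
    have "(u has_vector_derivative B.gpsi \<beta> (\<gamma> x) \<bullet> gd x) (at x)"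
      unfolding u_def[abs_def] using vd_comp[of \<gamma> "gd x" x "B.psi \<beta>"] good[OF x] B.psi_der by blast
    thus ?thesis unfolding u'_def has_real_derivative_iff_has_vector_derivative
      by (rule has_vector_derivative_at_within)
  qed
  have I2: "((\<lambda>x. if x \<in> N then 0 else u' x) has_integral (u t - u 0)) {0..t}"
    by (rule ftc_ac[OF t acu Nneg du])
  define J' where "J' \<sigma> = (if \<sigma> \<in> N then 0 else J \<sigma>)" for \<sigma>
  define I where "I = (f (B.Phi (\<gamma> 0)) - f (B.Phi (\<gamma> t))) - (u t - u 0)"
  have I3: "((\<lambda>\<sigma>. (1 / t) * S (1 - \<sigma> / t) - (if \<sigma> \<in> N then 0 else u' \<sigma>)) has_integral
             (1 / t) * (t * (f (B.Phi (\<gamma> 0)) - f (B.Phi (\<gamma> t)))) - (u t - u 0)) {0..t}"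
    by (intro has_integral_diff has_integral_mult_right I1 I2)
  have I3': "((\<lambda>\<sigma>. (1 / t) * S (1 - \<sigma> / t) - (if \<sigma> \<in> N then 0 else u' \<sigma>)) has_integral I) {0..t}"
  proof -
    have "(1 / t) * (t * (f (B.Phi (\<gamma> 0)) - f (B.Phi (\<gamma> t)))) - (u t - u 0) = I"
      unfolding I_def using t by simp
    thus ?thesis using I3 by simp
  qed
  have IJ: "(J' has_integral I) {0..t}"
  proof (rule has_integral_spike[OF Nneg _ I3'])
    fix \<sigma> assume \<sigma>: "\<sigma> \<in> {0..t} - N"
    show "J' \<sigma> = (1 / t) * S (1 - \<sigma> / t) - (if \<sigma> \<in> N then 0 else u' \<sigma>)"
      using Sgood[OF \<sigma>] \<sigma> t unfolding J'_def u'_def by (simp add: inner_minus_right)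
  qed
  have Jlow: "\<delta> * (infdist 0 (D (\<gamma> \<sigma>)))\<^sup>2 \<le> J \<sigma>" if \<sigma>: "\<sigma> \<in> {0..t} - N" for \<sigma>
  proof -
    have wD: "- gd \<sigma> \<in> D (\<gamma> \<sigma>)" using good[OF \<sigma>] by blast
    have "\<delta> * (norm (- gd \<sigma>))\<^sup>2 \<le> J \<sigma>" unfolding J_def using cond_f[OF wD] .
    moreover have "infdist 0 (D (\<gamma> \<sigma>)) \<le> norm (- gd \<sigma>)"
      using infdist_le[OF wD, of 0] by simp
    hence "(infdist 0 (D (\<gamma> \<sigma>)))\<^sup>2 \<le> (norm (- gd \<sigma>))\<^sup>2"
      by (intro power_mono) (auto simp: infdist_nonneg)
    ultimately show ?thesis using delta_pos by (meson mult_left_mono less_imp_le order_trans)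
  qed
  have J'nn: "0 \<le> J' \<sigma>" if "\<sigma> \<in> {0..t}" for \<sigma>
  proof (cases "\<sigma> \<in> N")
    case True thus ?thesis unfolding J'_def by simp
  next
    case False
    hence "\<sigma> \<in> {0..t} - N" using that by simp
    from Jlow[OF this] have "0 \<le> J \<sigma>" using delta_pos by (meson mult_nonneg_nonneg less_imp_le zero_le_power2 order_trans)
    thus ?thesis unfolding J'_def using False by simp
  qed
  have I0: "I \<ge> 0" using has_integral_nonneg[OF IJ] J'nn by blast
  have IK: "((\<lambda>x. (1 / \<delta>) * J' x) has_integral (1 / \<delta>) * I) {0..t}"
    by (rule has_integral_mult_right[OF IJ])
  have nnK: "(\<integral>\<^sup>+ x. ennreal ((1 / \<delta>) * J' x) * indicator {0..t} x \<partial>lborel) = ennreal ((1 / \<delta>) * I)"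
    by (rule nn_integral_has_integral_lebesgue'[OF _ IK]) (use J'nn delta_pos in simp)
  have ae: "AE x in lborel. ennreal ((infdist 0 (D (\<gamma> x)))\<^sup>2) * indicator {0..t} x
                            \<le> ennreal ((1 / \<delta>) * J' x) * indicator {0..t} x"
  proof (rule AE_I'[OF Nnull])
    show "{x \<in> space lborel. \<not> ennreal ((infdist 0 (D (\<gamma> x)))\<^sup>2) * indicator {0..t} x
                            \<le> ennreal ((1 / \<delta>) * J' x) * indicator {0..t} x} \<subseteq> N"
    proof (rule subsetI, rule ccontr)
      fix x assume x: "x \<in> {x \<in> space lborel. \<not> ennreal ((infdist 0 (D (\<gamma> x)))\<^sup>2) * indicator {0..t} x
                            \<le> ennreal ((1 / \<delta>) * J' x) * indicator {0..t} x}" and xN: "x \<notin> N"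
      show False
      proof (cases "x \<in> {0..t}")
        case False thus False using x by simp
      next
        case True
        hence xg: "x \<in> {0..t} - N" using xN by simp
        have "(infdist 0 (D (\<gamma> x)))\<^sup>2 \<le> (1 / \<delta>) * J' x"
          using Jlow[OF xg] delta_pos xN unfolding J'_def by (simp add: field_simps)
        hence "ennreal ((infdist 0 (D (\<gamma> x)))\<^sup>2) \<le> ennreal ((1 / \<delta>) * J' x)" by (rule ennreal_leI)
        thus False using x True by simp
      qed
    qed
  qed
  define X where "X = (\<integral>\<^sup>+ \<tau>. ennreal ((infdist 0 (D (\<gamma> \<tau>)))\<^sup>2) * indicator {0..t} \<tau> \<partial>lborel)"
  have XK: "X \<le> ennreal ((1 / \<delta>) * I)" unfolding X_def nnK[symmetric] by (rule nn_integral_mono_AE[OF ae])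
  have hd: "hfun f Dg Hyy \<beta> (\<gamma> t) - hfun f Dg Hyy \<beta> (\<gamma> 0) = - I"
    unfolding I_def u_def hfun_def B.Phi_def B.psi_def B.G_def by simp
  have e1: "enn2ereal X \<le> ereal ((1 / \<delta>) * I)"
  proof -
    have "enn2ereal X \<le> enn2ereal (ennreal ((1 / \<delta>) * I))" using XK by (simp add: less_eq_ennreal.rep_eq)
    thus ?thesis using I0 delta_pos by simp
  qed
  have "ereal \<delta> * enn2ereal X \<le> ereal \<delta> * ereal ((1 / \<delta>) * I)"
    by (rule ereal_mult_left_mono[OF e1]) (use delta_pos in simp)
  also have "\<dots> = ereal I" using delta_pos by simp
  finally have le: "ereal \<delta> * enn2ereal X \<le> ereal I" .
  have m: "- ereal I \<le> - (ereal \<delta> * enn2ereal X)" unfolding ereal_minus_le_minus by (rule le)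
  have "ereal (- I) = - ereal I" by simp
  hence fin: "ereal (- I) \<le> - (ereal \<delta> * enn2ereal X)" using m by simp
  thus "ereal (hfun f Dg Hyy \<beta> (\<gamma> t) - hfun f Dg Hyy \<beta> (\<gamma> 0))
            \<le> - (ereal \<delta> * enn2ereal (\<integral>\<^sup>+ \<tau>. ennreal ((infdist 0 (D (\<gamma> \<tau>)))\<^sup>2) * indicator {0..t} \<tau> \<partial>lborel))"
    using fin hd unfolding X_def by simp
qed


end
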